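(* Let $(\psi_i)_{i\in\mathbb N}$ be bounded measurable real functions on $[0,T]\times\overline{\mathcal O}$. For a finite nonempty $I\subset\mathbb N$ and $(t,x)\in[0,T]\times\overline{\mathcal O}$ let $$v^I(t,x)=\inf_{\alpha\in L^2(t,T;\mathbb R^m)}\inf_{\theta_I\in[t,T]^I}\Big\{\frac12\int_t^{\max_{i\in I}\theta_i}|\alpha_s|^2ds+\sum_{i\in I}\psi_i(\theta_i,Y^{t,x,\alpha}_{\theta_i})\Big\},$$ $$u^I(t,x)=\inf_{\alpha\in L^2(t,T;\mathbb R^m)}\inf_{\theta\in[t,T]}\Big\{\frac12\int_t^\theta|\alpha_s|^2ds+\phi^I(\theta,Y^{t,x,\alpha}_\theta)\Big\},$$ with $\phi^I=\psi_i$ if $I=\{i\}$ and $\phi^I=\min_{i\in I}\{\psi_i+v^{I\setminus\{i\}}\}$ if $I$ has at least two elements. Then $v^I=u^I$ on $[0,T]\times\overline{\mathcal O}$ for every finite nonempty $I$.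
   Context: Standing assumptions: $\mathcal O\subset\mathbb R^d$ bounded open of class $W^{2,\infty}$ with outward normal $n$; $\gamma$ Lipschitz with $\gamma\cdot n\ge c_0>0$ on $\partial\mathcal O$; $b,\sigma$ continuous on $[0,T]\times\overline{\mathcal O}$, Lipschitz in space uniformly in time. $Y^{t,x,\alpha}$: the unique solution on $[t,T]$ of $Y_s=x+\int_t^s(b(u,Y_u)-\sigma(u,Y_u)\alpha_u)du-z_s$, $Y_s\in\overline{\mathcal O}$, $z_s=\int_t^s1_{\partial\mathcal O}(Y_u)\gamma(Y_u)d|z|_u$ ($z$ continuous, of bounded variation). *)

theory Defs
  imports "HOL-Analysis.Analysis"
begin

definition total_variation :: "(real \<Rightarrow> 'a::real_normed_vector) \<Rightarrow> real \<Rightarrow> real \<Rightarrow> real" where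
  "total_variation z a b =
     (if a \<le> b then
        (SUP p \<in> {p::real list. p \<noteq> [] \<and> sorted p \<and> hd p = a \<and> last p = b}.
           (\<Sum>i < length p - 1. norm (z (p ! Suc i) - z (p ! i))))
      else 0)"

definition bounded_variation_on :: "(real \<Rightarrow> 'a::real_normed_vector) \<Rightarrow> real \<Rightarrow> real \<Rightarrow> bool" where
  "bounded_variation_on z a b \<longleftrightarrow>
     bdd_above ((\<lambda>p. \<Sum>i < length p - 1. norm (z (p ! Suc i) - z (p ! i))) `
                {p::real list. p \<noteq> [] \<and> sorted p \<and> hd p = a \<and> last p = b})"

text \<open>Domain of class W^{2,infinity}: given by a global defining function rho with
  Lipschitz gradient G (i.e. rho in C^{1,1}), Dom = {rho < 0}, G nonvanishing on {rho = 0}.\<close>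
definition W2inf_domain :: "(real^'d) set \<Rightarrow> (real^'d \<Rightarrow> real) \<Rightarrow> (real^'d \<Rightarrow> real^'d) \<Rightarrow> bool" where
  "W2inf_domain Dom \<rho> G \<longleftrightarrow>
     (\<forall>x. (\<rho> has_derivative (\<lambda>h. G x \<bullet> h)) (at x)) \<and>
     (\<exists>L. L-lipschitz_on UNIV G) \<and>
     Dom = {x. \<rho> x < 0} \<and>
     (\<forall>x. \<rho> x = 0 \<longrightarrow> G x \<noteq> 0)"

definition L2 :: "real \<Rightarrow> real \<Rightarrow> (real \<Rightarrow> real^'m) set" where
  "L2 t T = {\<alpha>. set_borel_measurable lborel {t..T} \<alpha> \<and>
                 set_integrable lborel {t..T} (\<lambda>s. (norm (\<alpha> s))\<^sup>2)}"

definition refl_sol ::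
  "(real^'d) set \<Rightarrow> (real^'d \<Rightarrow> real^'d) \<Rightarrow> (real \<Rightarrow> real^'d \<Rightarrow> real^'d)
   \<Rightarrow> (real \<Rightarrow> real^'d \<Rightarrow> real^'m^'d) \<Rightarrow> real \<Rightarrow> real \<Rightarrow> real^'d \<Rightarrow> (real \<Rightarrow> real^'m)
   \<Rightarrow> (real \<Rightarrow> real^'d) \<Rightarrow> (real \<Rightarrow> real^'d) \<Rightarrow> bool" where
  "refl_sol Dom \<gamma> b \<sigma> T t x \<alpha> Y z \<longleftrightarrow>
     continuous_on {t..T} Y \<and> continuous_on {t..T} z \<and> bounded_variation_on z t T \<and>
     (\<forall>s\<in>{t..T}.
        Y s \<in> closure Dom \<and>
        Y s = x + (LINT u:{t..s}|lborel. b u (Y u) - \<sigma> u (Y u) *v \<alpha> u) - z s \<and>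
        z s = (LINT u:{t..s}|interval_measure (\<lambda>r. total_variation z t (min r T)).
                 indicator (frontier Dom) (Y u) *\<^sub>R \<gamma> (Y u)))"

definition Ysol ::
  "(real^'d) set \<Rightarrow> (real^'d \<Rightarrow> real^'d) \<Rightarrow> (real \<Rightarrow> real^'d \<Rightarrow> real^'d)
   \<Rightarrow> (real \<Rightarrow> real^'d \<Rightarrow> real^'m^'d) \<Rightarrow> real \<Rightarrow> real \<Rightarrow> real^'d \<Rightarrow> (real \<Rightarrow> real^'m)
   \<Rightarrow> real \<Rightarrow> real^'d" where
  "Ysol Dom \<gamma> b \<sigma> T t x \<alpha> s = (THE y. \<exists>Y z. refl_sol Dom \<gamma> b \<sigma> T t x \<alpha> Y z \<and> Y s = y)"

definition vI ::
  "(real^'d) set \<Rightarrow> (real^'d \<Rightarrow> real^'d) \<Rightarrow> (real \<Rightarrow> real^'d \<Rightarrow> real^'d)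
   \<Rightarrow> (real \<Rightarrow> real^'d \<Rightarrow> real^'m^'d) \<Rightarrow> real \<Rightarrow> (nat \<Rightarrow> real \<Rightarrow> real^'d \<Rightarrow> real)
   \<Rightarrow> nat set \<Rightarrow> real \<Rightarrow> real^'d \<Rightarrow> real" where
  "vI Dom \<gamma> b \<sigma> T \<psi> I t x =
     (INF p \<in> {(\<alpha>, \<theta>). \<alpha> \<in> (L2 t T :: (real \<Rightarrow> real^'m) set) \<and> (\<forall>i\<in>I. \<theta> i \<in> {t..T})}.
        (case p of (\<alpha>, \<theta>) \<Rightarrow>
          (1/2) * (LINT s:{t..Max (\<theta> ` I)}|lborel. (norm (\<alpha> s))\<^sup>2)
          + (\<Sum>i\<in>I. \<psi> i (\<theta> i) (Ysol Dom \<gamma> b \<sigma> T t x \<alpha> (\<theta> i)))))"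

definition phiI ::
  "(real^'d) set \<Rightarrow> (real^'d \<Rightarrow> real^'d) \<Rightarrow> (real \<Rightarrow> real^'d \<Rightarrow> real^'d)
   \<Rightarrow> (real \<Rightarrow> real^'d \<Rightarrow> real^'m^'d) \<Rightarrow> real \<Rightarrow> (nat \<Rightarrow> real \<Rightarrow> real^'d \<Rightarrow> real)
   \<Rightarrow> nat set \<Rightarrow> real \<Rightarrow> real^'d \<Rightarrow> real" where
  "phiI Dom \<gamma> b \<sigma> T \<psi> I t x =
     (if card I = 1 then \<psi> (the_elem I) t x
      else Min ((\<lambda>i. \<psi> i t x + vI Dom \<gamma> b \<sigma> T \<psi> (I - {i}) t x) ` I))"

definition uI ::
  "(real^'d) set \<Rightarrow> (real^'d \<Rightarrow> real^'d) \<Rightarrow> (real \<Rightarrow> real^'d \<Rightarrow> real^'d)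
   \<Rightarrow> (real \<Rightarrow> real^'d \<Rightarrow> real^'m^'d) \<Rightarrow> real \<Rightarrow> (nat \<Rightarrow> real \<Rightarrow> real^'d \<Rightarrow> real)
   \<Rightarrow> nat set \<Rightarrow> real \<Rightarrow> real^'d \<Rightarrow> real" where
  "uI Dom \<gamma> b \<sigma> T \<psi> I t x =
     (INF p \<in> {(\<alpha>, \<theta>). \<alpha> \<in> (L2 t T :: (real \<Rightarrow> real^'m) set) \<and> \<theta> \<in> {t..T}}.
        (case p of (\<alpha>, \<theta>) \<Rightarrow>
          (1/2) * (LINT s:{t..\<theta>}|lborel. (norm (\<alpha> s))\<^sup>2)
          + phiI Dom \<gamma> b \<sigma> T \<psi> I \<theta> (Ysol Dom \<gamma> b \<sigma> T t x \<alpha> \<theta>)))"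

end

theory Submission
  imports Defs
begin


fun vs :: "(real \<Rightarrow> 'a::real_normed_vector) \<Rightarrow> real list \<Rightarrow> real" where
  "vs z (x # y # xs) = norm (z y - z x) + vs z (y # xs)"
| "vs z _ = 0"

lemma vs_eq: "(\<Sum>i < length p - 1. norm (z (p ! Suc i) - z (p ! i))) = vs z p"
proof (induction z p rule: vs.induct)
  case (1 z x y xs)
  have "(\<Sum>i < length (x # y # xs) - 1. norm (z ((x # y # xs) ! Suc i) - z ((x # y # xs) ! i)))
      = (\<Sum>i < Suc (length (y # xs) - 1). norm (z ((x # y # xs) ! Suc i) - z ((x # y # xs) ! i)))"
    by simp
  also have "\<dots> = norm (z y - z x) + (\<Sum>i < length (y # xs) - 1. norm (z ((y # xs) ! Suc i) - z ((y # xs) ! i)))"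
    by (subst sum.lessThan_Suc_shift) simp
  finally show ?case using 1 by simp
qed auto

definition PP :: "real \<Rightarrow> real \<Rightarrow> real list set" where
  "PP a b = {p::real list. p \<noteq> [] \<and> sorted p \<and> hd p = a \<and> last p = b}"

lemma tv_def2: "total_variation z a b = (if a \<le> b then (SUP p \<in> PP a b. vs z p) else 0)"
  unfolding total_variation_def PP_def vs_eq by simp

lemma bv_def2: "bounded_variation_on z a b \<longleftrightarrow> bdd_above (vs z ` PP a b)"
  unfolding bounded_variation_on_def PP_def vs_eq by simp

lemma vs_nonneg: "vs z p \<ge> 0"
  by (induction z p rule: vs.induct) auto

lemma sorted_bounds: "sorted p \<Longrightarrow> p \<noteq> [] \<Longrightarrow> x \<in> set p \<Longrightarrow> hd p \<le> x \<and> x \<le> last p"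
proof (induction p)
  case (Cons y ys)
  then show ?case by (cases ys) auto
qed simp

lemma PP_set: "p \<in> PP a b \<Longrightarrow> set p \<subseteq> {a..b}"
  unfolding PP_def using sorted_bounds by fastforce

lemma PP_le: "p \<in> PP a b \<Longrightarrow> a \<le> b"
  unfolding PP_def using sorted_bounds[of p "hd p"] by (cases p) auto

lemma PP_two: "a \<le> b \<Longrightarrow> [a, b] \<in> PP a b"
  unfolding PP_def by auto

lemma vs_cong: "(\<And>x. x \<in> set p \<Longrightarrow> z x = c + z' x) \<Longrightarrow> vs z p = vs z' p"
  by (induction z p rule: vs.induct) (auto simp: algebra_simps)

lemma vs_snoc: "xs \<noteq> [] \<Longrightarrow> vs z (xs @ [y]) = vs z xs + norm (z y - z (last xs))"
proof (induction xs)
  case (Cons a xs)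
  then show ?case by (cases xs) auto
qed simp

lemma vs_append: "vs z (xs @ y # ys) = vs z (xs @ [y]) + vs z (y # ys)"
proof (induction xs)
  case Nil then show ?case by simp
next
  case (Cons a xs)
  then show ?case by (cases xs) auto
qed

lemma vs_append2: "xs \<noteq> [] \<Longrightarrow> ys \<noteq> [] \<Longrightarrow> vs z (xs @ ys) = vs z xs + norm (z (hd ys) - z (last xs)) + vs z ys"
proof -
  assume xs: "xs \<noteq> []" and ys: "ys \<noteq> []"
  obtain y ys' where y: "ys = y # ys'" using ys by (cases ys) auto
  have "vs z (xs @ y # ys') = vs z (xs @ [y]) + vs z (y # ys')" by (rule vs_append)
  then show ?thesis using vs_snoc[OF xs, of z y] y by simp
qed

lemma vs_split_le:
  assumes "ys \<noteq> []"
  shows "vs z (xs @ ys) \<le> vs z (xs @ [m]) + vs z (m # ys)"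
proof -
  obtain y ys' where ys: "ys = y # ys'" using assms by (cases ys) auto
  have e3: "vs z (m # ys) = norm (z y - z m) + vs z ys" unfolding ys by simp
  show ?thesis
  proof (cases "xs = []")
    case True
    then show ?thesis using e3 by (simp add: ys)
  next
    case False
    have e1: "vs z (xs @ ys) = vs z xs + norm (z y - z (last xs)) + vs z ys"
      using vs_append2[OF False assms, of z] ys by simp
    have e2: "vs z (xs @ [m]) = vs z xs + norm (z m - z (last xs))"
      by (rule vs_snoc[OF False])
    have "norm (z y - z (last xs)) \<le> norm (z m - z (last xs)) + norm (z y - z m)"
      using norm_triangle_ineq[of "z m - z (last xs)" "z y - z m"] by simp
    then show ?thesis using e1 e2 e3 by linarith
  qed
qed

lemma sorted_filter_split: "sorted r \<Longrightarrow> filter (\<lambda>x. x < m) r @ filter (\<lambda>x. \<not> x < m) r = (r::real list)"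
proof (induction r)
  case (Cons x xs)
  show ?case
  proof (cases "x < m")
    case True then show ?thesis using Cons by auto
  next
    case False
    then have "\<forall>y\<in>set xs. \<not> y < m" using Cons.prems by auto
    then have "filter (\<lambda>x. x < m) xs = []" "filter (\<lambda>x. \<not> x < m) xs = xs"
      by (auto simp: filter_empty_conv)
    then show ?thesis using False by simp
  qed
qed simp

lemma last_filter: "r \<noteq> [] \<Longrightarrow> P (last r) \<Longrightarrow> last (filter P r) = last r"
  by (metis append_butlast_last_id filter.simps filter_append last_snoc)

lemma PP_cut1:
  assumes r: "r \<in> PP a b" and m: "a \<le> m" "m \<le> b"
  shows "filter (\<lambda>x. x < m) r @ [m] \<in> PP a m"
proof -
  have rs: "sorted r" "r \<noteq> []" "hd r = a" "last r = b" using r unfolding PP_def by auto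
  have hd: "hd (filter (\<lambda>x. x < m) r @ [m]) = a"
  proof (cases "a < m")
    case True
    then show ?thesis using rs by (cases r) auto
  next
    case False
    then have "a = m" using m by simp
    then have "filter (\<lambda>x. x < m) r = []" using PP_set[OF r] by (auto simp: filter_empty_conv)
    then show ?thesis using \<open>a = m\<close> by simp
  qed
  show ?thesis unfolding PP_def using hd rs
    by (auto simp: sorted_append sorted_wrt_filter less_imp_le)
qed

lemma PP_cut2:
  assumes r: "r \<in> PP a b" and m: "a \<le> m" "m \<le> b"
  shows "m # filter (\<lambda>x. \<not> x < m) r \<in> PP m b"
proof -
  have rs: "sorted r" "r \<noteq> []" "hd r = a" "last r = b" using r unfolding PP_def by auto
  have "b \<in> set (filter (\<lambda>x. \<not> x < m) r)" using rs m by auto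
  then have ne: "filter (\<lambda>x. \<not> x < m) r \<noteq> []" by (metis empty_iff list.set(1))
  have "last (filter (\<lambda>x. \<not> x < m) r) = b" using last_filter[of r "\<lambda>x. \<not> x < m"] rs m by simp
  then show ?thesis unfolding PP_def using ne rs
    by (auto simp: sorted_wrt_filter)
qed

lemma vs_cut:
  assumes r: "r \<in> PP a b" and m: "a \<le> m" "m \<le> b"
  shows "vs z r \<le> vs z (filter (\<lambda>x. x < m) r @ [m]) + vs z (m # filter (\<lambda>x. \<not> x < m) r)"
proof -
  have rs: "sorted r" using r unfolding PP_def by auto
  have "b \<in> set (filter (\<lambda>x. \<not> x < m) r)" using r m unfolding PP_def by auto
  then have ne: "filter (\<lambda>x. \<not> x < m) r \<noteq> []" by (metis empty_iff list.set(1))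
  show ?thesis using vs_split_le[OF ne, of z "filter (\<lambda>x. x < m) r" m] sorted_filter_split[OF rs, of m]
    by simp
qed

lemma PP_join:
  assumes p: "p \<in> PP a m" and q: "q \<in> PP m b"
  shows "butlast p @ q \<in> PP a b" "vs z (butlast p @ q) = vs z p + vs z q"
proof -
  have ps: "sorted p" "p \<noteq> []" "hd p = a" "last p = m" using p unfolding PP_def by auto
  have qs: "sorted q" "q \<noteq> []" "hd q = m" "last q = b" using q unfolding PP_def by auto
  have pe: "p = butlast p @ [m]" using ps append_butlast_last_id by metis
  have qe: "q = m # tl q" using qs by (cases q) auto
  have "set (butlast p) \<subseteq> {a..m}" using PP_set[OF p] by (meson in_set_butlastD subset_iff)
  moreover have "set q \<subseteq> {m..b}" using PP_set[OF q] .
  moreover have "sorted (butlast p)" using ps by (metis sorted_butlast)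
  ultimately have "sorted (butlast p @ q)" using qs unfolding sorted_append
    by (meson atLeastAtMost_iff order_trans subsetD)
  moreover have "hd (butlast p @ q) = a"
  proof (cases "butlast p = []")
    case True
    then have "p = [m]" using pe by (metis append_Nil)
    then have "a = m" using ps(3) by simp
    then show ?thesis using qs(3) True by simp
  next
    case False
    have "hd p = hd (butlast p)" using hd_append2[OF False, of "[m]"] pe by metis
    then show ?thesis using hd_append2[OF False, of q] ps by simp
  qed
  ultimately show "butlast p @ q \<in> PP a b" unfolding PP_def using qs by auto
  have "vs z (butlast p @ q) = vs z (butlast p @ m # tl q)" by (simp only: qe[symmetric])
  also have "\<dots> = vs z (butlast p @ [m]) + vs z (m # tl q)" by (rule vs_append)
  also have "\<dots> = vs z p + vs z q" by (simp only: qe[symmetric] pe[symmetric])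
  finally show "vs z (butlast p @ q) = vs z p + vs z q" .
qed


lemma PP_ne: "a \<le> b \<Longrightarrow> PP a b \<noteq> {}"
  using PP_two by blast

lemma vs_le_tv: "bounded_variation_on z a b \<Longrightarrow> p \<in> PP a b \<Longrightarrow> vs z p \<le> total_variation z a b"
  unfolding tv_def2 bv_def2 using PP_le by (auto intro: cSUP_upper)

lemma tv_le: "a \<le> b \<Longrightarrow> (\<And>p. p \<in> PP a b \<Longrightarrow> vs z p \<le> B) \<Longrightarrow> total_variation z a b \<le> B"
  unfolding tv_def2 using PP_ne by (auto intro: cSUP_least)

lemma tv_nonneg: "bounded_variation_on z a b \<Longrightarrow> 0 \<le> total_variation z a b"
proof (cases "a \<le> b")
  case True
  assume bv: "bounded_variation_on z a b"
  show ?thesis using vs_le_tv[OF bv PP_two[OF True]] vs_nonneg[of z "[a,b]"] by linarith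
qed (simp add: tv_def2)

lemma vs_const: "(\<And>x. x \<in> set p \<Longrightarrow> x = a) \<Longrightarrow> vs z p = 0"
  by (induction z p rule: vs.induct) auto

lemma tv_refl: "total_variation z a a = 0"
proof -
  have "(SUP p \<in> PP a a. vs z p) = (SUP p \<in> PP a a. 0::real)"
    using PP_set by (intro SUP_cong refl vs_const) fastforce
  also have "\<dots> = 0" using PP_ne[of a a] by simp
  finally show ?thesis unfolding tv_def2 by simp
qed

lemma bv_refl: "bounded_variation_on z a a"
  unfolding bv_def2 using PP_set[of _ a a] vs_const[of _ a z]
  by (intro bdd_aboveI[of _ 0]) fastforce

lemma bv_split:
  assumes m: "a \<le> m" "m \<le> b"
  shows "bounded_variation_on z a b \<longleftrightarrow> bounded_variation_on z a m \<and> bounded_variation_on z m b"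
proof
  assume bv: "bounded_variation_on z a b"
  then obtain B where B: "\<And>p. p \<in> PP a b \<Longrightarrow> vs z p \<le> B" unfolding bv_def2 bdd_above_def by auto
  have "bounded_variation_on z a m" unfolding bv_def2
  proof (rule bdd_aboveI)
    fix x assume "x \<in> vs z ` PP a m"
    then obtain p where p: "p \<in> PP a m" "x = vs z p" by auto
    have "vs z (butlast p @ [m, b]) = vs z p + vs z [m, b]" "butlast p @ [m, b] \<in> PP a b"
      using PP_join[OF p(1) PP_two[OF m(2)]] by auto
    moreover have "vs z (butlast p @ [m, b]) \<le> B" using B calculation(2) by blast
    ultimately show "x \<le> B" using p vs_nonneg[of z "[m,b]"] by linarith
  qed
  moreover have "bounded_variation_on z m b" unfolding bv_def2
  proof (rule bdd_aboveI)
    fix x assume "x \<in> vs z ` PP m b"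
    then obtain p where p: "p \<in> PP m b" "x = vs z p" by auto
    have "vs z (butlast [a, m] @ p) = vs z [a, m] + vs z p" "butlast [a, m] @ p \<in> PP a b"
      using PP_join[OF PP_two[OF m(1)] p(1)] by auto
    moreover have "vs z (butlast [a, m] @ p) \<le> B" using B calculation(2) by blast
    ultimately show "x \<le> B" using p vs_nonneg[of z "[a,m]"] by linarith
  qed
  ultimately show "bounded_variation_on z a m \<and> bounded_variation_on z m b" by simp
next
  assume "bounded_variation_on z a m \<and> bounded_variation_on z m b"
  then have b1: "bounded_variation_on z a m" and b2: "bounded_variation_on z m b" by auto
  show "bounded_variation_on z a b" unfolding bv_def2
  proof (rule bdd_aboveI)
    fix x assume "x \<in> vs z ` PP a b"
    then obtain r where r: "r \<in> PP a b" "x = vs z r" by auto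
    show "x \<le> total_variation z a m + total_variation z m b"
      using vs_cut[OF r(1) m, of z] vs_le_tv[OF b1 PP_cut1[OF r(1) m]] vs_le_tv[OF b2 PP_cut2[OF r(1) m]] r(2)
      by linarith
  qed
qed

lemma tv_split:
  assumes m: "a \<le> m" "m \<le> b" and bv: "bounded_variation_on z a b"
  shows "total_variation z a b = total_variation z a m + total_variation z m b"
proof -
  have b1: "bounded_variation_on z a m" and b2: "bounded_variation_on z m b"
    using bv bv_split[OF m] by auto
  have le1: "total_variation z a b \<le> total_variation z a m + total_variation z m b"
  proof (rule tv_le)
    show "a \<le> b" using m by simp
    fix r assume r: "r \<in> PP a b"
    show "vs z r \<le> total_variation z a m + total_variation z m b"
      using vs_cut[OF r m, of z] vs_le_tv[OF b1 PP_cut1[OF r m]] vs_le_tv[OF b2 PP_cut2[OF r m]]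
      by linarith
  qed
  have "total_variation z m b \<le> total_variation z a b - total_variation z a m"
  proof (rule tv_le)
    show "m \<le> b" using m by simp
    fix q assume q: "q \<in> PP m b"
    have "total_variation z a m \<le> total_variation z a b - vs z q"
    proof (rule tv_le)
      show "a \<le> m" using m by simp
      fix p assume p: "p \<in> PP a m"
      show "vs z p \<le> total_variation z a b - vs z q"
        using PP_join(2)[OF p q] PP_join(1)[OF p q] vs_le_tv[OF bv, of "butlast p @ q"] by (metis le_diff_eq)
    qed
    then show "vs z q \<le> total_variation z a b - total_variation z a m" by linarith
  qed
  with le1 show ?thesis by linarith
qed

lemma bv_sub: "bounded_variation_on z a b \<Longrightarrow> a \<le> c \<Longrightarrow> c \<le> d \<Longrightarrow> d \<le> b \<Longrightarrow> bounded_variation_on z c d"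
  using bv_split by (meson order_trans)

lemma vs_img_cong:
  assumes "\<And>x. x \<in> {a..b} \<Longrightarrow> z x = c + z' x"
  shows "vs z ` PP a b = vs z' ` PP a b"
proof (rule image_cong[OF refl])
  fix p assume "p \<in> PP a b"
  then show "vs z p = vs z' p" using PP_set assms by (intro vs_cong) blast
qed

lemma tv_cong:
  assumes "\<And>x. x \<in> {a..b} \<Longrightarrow> z x = c + z' x"
  shows "total_variation z a b = total_variation z' a b"
    "bounded_variation_on z a b \<longleftrightarrow> bounded_variation_on z' a b"
  unfolding tv_def2 bv_def2 using vs_img_cong[OF assms] by (simp_all add: image_image)


lemma vs_rep: "(\<And>x. x \<in> set xs \<Longrightarrow> x = r) \<Longrightarrow> xs \<noteq> [] \<Longrightarrow> vs z (xs @ [m]) = norm (z m - z r)"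
  using vs_snoc[of xs z m] vs_const[of xs r z] by (metis last_in_set add_0)

lemma tv_small:
  assumes cont: "continuous_on {r..T} z" and bv: "bounded_variation_on z r T"
    and rT: "r < T" and e: "e > 0"
  shows "\<exists>d>0. r + d \<le> T \<and> total_variation z r (r + d) < e"
proof -
  define V where "V = total_variation z r T"
  have "V - e/2 < (SUP p \<in> PP r T. vs z p)" using rT e unfolding V_def tv_def2 by simp
  then obtain p where p: "p \<in> PP r T" "V - e/2 < vs z p"
    using less_cSUP_iff[OF PP_ne[of r T] bv[unfolded bv_def2]] rT by auto
  obtain d1 where d1: "d1 > 0" "\<And>y. y \<in> {r..T} \<Longrightarrow> dist y r < d1 \<Longrightarrow> dist (z y) (z r) < e/2"
    using cont rT e unfolding continuous_on_iff by (metis atLeastAtMost_iff half_gt_zero less_imp_le order_refl)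
  define S where "S = {x \<in> set p. r < x}"
  have TS: "T \<in> S" using p(1) rT unfolding S_def PP_def by auto
  have finS: "finite S" unfolding S_def by simp
  define h0 where "h0 = Min S - r"
  have "Min S \<in> S" using Min_in[OF finS] TS by auto
  then have h0: "h0 > 0" unfolding h0_def S_def by auto
  define d where "d = min (d1/2) h0"
  have d: "d > 0" using d1 h0 unfolding d_def by simp
  define m where "m = r + d"
  have mS: "\<And>x. x \<in> S \<Longrightarrow> m \<le> x" using Min_le[OF finS] unfolding m_def d_def h0_def by fastforce
  have mT: "m \<le> T" using mS[OF TS] .
  have rm: "r \<le> m" using d unfolding m_def by simp
  have filt: "\<And>x. x \<in> set (filter (\<lambda>x. x < m) p) \<Longrightarrow> x = r"
  proof -
    fix x assume "x \<in> set (filter (\<lambda>x. x < m) p)"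
    then have x: "x \<in> set p" "x < m" by auto
    then have "r \<le> x" using PP_set[OF p(1)] by auto
    moreover have "\<not> r < x" using mS x unfolding S_def by force
    ultimately show "x = r" by simp
  qed
  have ne: "filter (\<lambda>x. x < m) p \<noteq> []"
  proof -
    have "hd p \<in> set p" "hd p = r" using p(1) unfolding PP_def by auto
    then have "r \<in> set (filter (\<lambda>x. x < m) p)" using d unfolding m_def by auto
    then show ?thesis by (metis empty_iff list.set(1))
  qed
  have bvm: "bounded_variation_on z m T" using bv_sub[OF bv rm mT order_refl] .
  have "vs z p \<le> vs z (filter (\<lambda>x. x < m) p @ [m]) + vs z (m # filter (\<lambda>x. \<not> x < m) p)"
    by (rule vs_cut[OF p(1) rm mT])
  also have "vs z (filter (\<lambda>x. x < m) p @ [m]) = norm (z m - z r)" by (rule vs_rep[OF filt ne])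
  also have "vs z (m # filter (\<lambda>x. \<not> x < m) p) \<le> total_variation z m T"
    by (rule vs_le_tv[OF bvm PP_cut2[OF p(1) rm mT]])
  finally have 1: "vs z p \<le> norm (z m - z r) + total_variation z m T" by simp
  have "dist (z m) (z r) < e/2" using d1(2)[of m] rm mT d unfolding m_def d_def dist_real_def by auto
  then have 2: "norm (z m - z r) < e/2" by (simp add: dist_norm)
  have 3: "V = total_variation z r m + total_variation z m T" unfolding V_def by (rule tv_split[OF rm mT bv])
  have "total_variation z r m < e" using 1 2 3 p(2) by linarith
  then show ?thesis using d mT unfolding m_def by auto
qed

lemma F_mono:
  assumes bv: "bounded_variation_on z t T" and tT: "t \<le> T" and xy: "x \<le> y"
  shows "total_variation z t (min x T) \<le> total_variation z t (min y T)"
proof (cases "t \<le> min x T")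
  case False
  then have "total_variation z t (min x T) = 0" unfolding tv_def2 if_not_P[OF False] by simp
  moreover have "bounded_variation_on z t (min y T)"
  proof (cases "t \<le> min y T")
    case True then show ?thesis using bv_sub[OF bv order_refl True] by simp
  next
    case False
    then have "PP t (min y T) = {}" using PP_le by blast
    then show ?thesis unfolding bv_def2 by simp
  qed
  ultimately show ?thesis using tv_nonneg by metis
next
  case True
  have bv1: "bounded_variation_on z t (min y T)" using bv_sub[OF bv order_refl, of "min y T"] True xy by simp
  have "total_variation z t (min y T) = total_variation z t (min x T) + total_variation z (min x T) (min y T)"
    using tv_split[OF True _ bv1] xy by simp
  moreover have "bounded_variation_on z (min x T) (min y T)"
    using bv_sub[OF bv1 True, of "min y T"] xy by (simp add: min_def)
  ultimately show ?thesis using tv_nonneg by fastforce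
qed

lemma F_rc:
  assumes cont: "continuous_on {t..T} z" and bv: "bounded_variation_on z t T" and tT: "t \<le> T"
  shows "continuous (at_right a) (\<lambda>s. total_variation z t (min s T))"
proof -
  define F where "F = (\<lambda>s. total_variation z t (min s T))"
  have mono: "\<And>x y. x \<le> y \<Longrightarrow> F x \<le> F y"
    using F_mono[OF bv tT] unfolding F_def by blast
  have key: "\<forall>e>0. \<exists>d>0. F (a + d) - F a < e"
  proof (intro allI impI)
    fix e :: real assume e: "e > 0"
    show "\<exists>d>0. F (a + d) - F a < e"
    proof (cases "a < t")
      case True
      have "a + (t - a)/2 < t" using True by (simp add: field_simps)
      then have n1: "\<not> t \<le> min (a + (t - a)/2) T" "\<not> t \<le> min a T" using True by auto
      have "F (a + (t - a)/2) = 0" "F a = 0"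
        unfolding F_def tv_def2 if_not_P[OF n1(1)] if_not_P[OF n1(2)] by simp_all
      then show ?thesis using True e by (intro exI[of _ "(t - a)/2"]) auto
    next
      case False
      show ?thesis
      proof (cases "a < T")
        case False
        then show ?thesis using e unfolding F_def by (intro exI[of _ 1]) auto
      next
        case True
        have ta: "t \<le> a" using \<open>\<not> a < t\<close> by simp
        obtain d where d: "d > 0" "a + d \<le> T" "total_variation z a (a + d) < e"
          using tv_small[OF continuous_on_subset[OF cont] bv_sub[OF bv ta _ order_refl] True e] ta True
          by auto
        have bv1: "bounded_variation_on z t (a + d)" using bv_sub[OF bv order_refl _ d(2)] ta d by simp
        have "total_variation z t (a + d) = total_variation z t a + total_variation z a (a + d)"
          using tv_split[OF ta _ bv1] d by simp
        then show ?thesis using d True unfolding F_def by (intro exI[of _ d]) auto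
      qed
    qed
  qed
  have "continuous (at_right a) F"
    using continuous_at_right_real_increasing[of F a] mono key by blast
  then show ?thesis unfolding F_def .
qed


lemma im_meas_eq: "measurable (interval_measure F) N = measurable borel N"
  by (rule measurable_cong_sets) simp_all

lemma im_Ioc_fin:
  assumes mF: "\<And>x y. x \<le> y \<Longrightarrow> F x \<le> F y" and rF: "\<And>a. continuous (at_right a) F"
  shows "emeasure (interval_measure F) {a<..b} < \<infinity>"
  using emeasure_interval_measure_Ioc_eq[of F a b, OF mF rF] by (simp add: less_top[symmetric])

lemma im_agree:
  fixes F G :: "real \<Rightarrow> real" and g :: "real \<Rightarrow> 'b::{banach, second_countable_topology}"
  assumes mF: "\<And>x y. x \<le> y \<Longrightarrow> F x \<le> F y" and rF: "\<And>a. continuous (at_right a) F"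
    and mG: "\<And>x y. x \<le> y \<Longrightarrow> G x \<le> G y" and rG: "\<And>a. continuous (at_right a) G"
    and eq: "\<And>x. x \<in> {a..b} \<Longrightarrow> F x = G x + c" and ab0: "a \<le> b"
    and A: "A \<in> sets borel" "A \<subseteq> {a<..b}"
    and fm: "(\<lambda>u. indicator A u *\<^sub>R g u) \<in> borel_measurable borel"
  shows "(LINT u:A|interval_measure F. g u) = (LINT u:A|interval_measure G. g u)"
proof -
  define S where "S = {a<..b}"
  have S: "S \<in> sets borel" unfolding S_def by simp
  define MF where "MF = density (interval_measure F) (indicator S)"
  define MG where "MG = density (interval_measure G) (indicator S)"
  have emF: "emeasure MF {x<..} = emeasure (interval_measure F) (S \<inter> {x<..})" for x
    unfolding MF_def by (rule emeasure_restricted) (simp_all add: S)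
  have emG: "emeasure MG {x<..} = emeasure (interval_measure G) (S \<inter> {x<..})" for x
    unfolding MG_def by (rule emeasure_restricted) (simp_all add: S)
  have int: "S \<inter> {x<..} = (if x < b then {max a x<..b} else {})" for x
    unfolding S_def by auto
  have MFG: "MF = MG"
  proof (rule measure_eqI_lessThan)
    show "sets MF = sets borel" "sets MG = sets borel" unfolding MF_def MG_def by simp_all
    fix x
    show "emeasure MF {x<..} < \<infinity>"
      unfolding emF int using im_Ioc_fin[OF mF rF] by simp
    show "emeasure MF {x<..} = emeasure MG {x<..}"
    proof (cases "x < b")
      case True
      have ab: "max a x \<in> {a..b}" "b \<in> {a..b}" using True ab0 by (auto simp: max_def)
      have "emeasure MF {x<..} = emeasure (interval_measure F) {max a x<..b}"
        unfolding emF int using True by simp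
      also have "\<dots> = ennreal (F b - F (max a x))"
        by (rule emeasure_interval_measure_Ioc[OF _ mF rF]) (use True ab0 in auto)
      also have "\<dots> = ennreal (G b - G (max a x))" using eq[OF ab(1)] eq[OF ab(2)] by simp
      also have "\<dots> = emeasure (interval_measure G) {max a x<..b}"
        by (rule emeasure_interval_measure_Ioc[OF _ mG rG, symmetric]) (use True ab0 in auto)
      also have "\<dots> = emeasure MG {x<..}"
        unfolding emG int using True by simp
      finally show ?thesis .
    next
      case False
      then show ?thesis unfolding emF emG int by simp
    qed
  qed
  have ind: "indicator S u *\<^sub>R (indicator A u *\<^sub>R g u) = indicator A u *\<^sub>R g u" for u
    using A(2) unfolding S_def by (auto split: split_indicator)
  have "\<And>H. (LINT u:A|interval_measure H. g u) = integral\<^sup>L (density (interval_measure H) (indicator S)) (\<lambda>u. indicator A u *\<^sub>R g u)"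
  proof -
    fix H :: "real \<Rightarrow> real"
    have "integral\<^sup>L (density (interval_measure H) (\<lambda>x. ennreal (indicator S x))) (\<lambda>u. indicator A u *\<^sub>R g u)
        = integral\<^sup>L (interval_measure H) (\<lambda>u. indicator S u *\<^sub>R (indicator A u *\<^sub>R g u))"
      by (rule integral_density) (auto simp: im_meas_eq fm S borel_measurable_indicator)
    then have "integral\<^sup>L (density (interval_measure H) (indicator S)) (\<lambda>u. indicator A u *\<^sub>R g u)
        = integral\<^sup>L (interval_measure H) (\<lambda>u. indicator S u *\<^sub>R (indicator A u *\<^sub>R g u))"
      by (simp add: ennreal_indicator)
    then show "(LINT u:A|interval_measure H. g u) = integral\<^sup>L (density (interval_measure H) (indicator S)) (\<lambda>u. indicator A u *\<^sub>R g u)"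
      unfolding set_lebesgue_integral_def ind by simp
  qed
  then show ?thesis using MFG unfolding MF_def MG_def by simp
qed

lemma im_point:
  assumes mF: "\<And>x y. x \<le> y \<Longrightarrow> F x \<le> F y" and rF: "\<And>a. continuous (at_right a) F"
    and "F c = F (c - 1)"
  shows "emeasure (interval_measure F) {c} = 0"
proof -
  have "emeasure (interval_measure F) {c} \<le> emeasure (interval_measure F) {c - 1<..c}"
    by (rule emeasure_mono) auto
  also have "\<dots> = 0" using assms by (simp add: emeasure_interval_measure_Ioc)
  finally show ?thesis by simp
qed

lemma im_integrable:
  fixes g :: "real \<Rightarrow> 'b::{banach, second_countable_topology}"
  assumes mF: "\<And>x y. x \<le> y \<Longrightarrow> F x \<le> F y" and rF: "\<And>a. continuous (at_right a) F"
    and A: "A \<in> sets borel" "A \<subseteq> {a<..b}" and g: "(\<lambda>u. indicator A u *\<^sub>R g u) \<in> borel_measurable borel"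
    and B: "\<And>u. u \<in> A \<Longrightarrow> norm (g u) \<le> B"
  shows "set_integrable (interval_measure F) A g"
  unfolding set_integrable_def
proof (rule integrableI_bounded_set[where A=A and B=B])
  show "A \<in> sets (interval_measure F)" using A by simp
  show "(\<lambda>u. indicator A u *\<^sub>R g u) \<in> borel_measurable (interval_measure F)" using g by (simp add: im_meas_eq)
  have "emeasure (interval_measure F) A \<le> emeasure (interval_measure F) {a<..b}"
    by (rule emeasure_mono) (use A in auto)
  then show "emeasure (interval_measure F) A < \<infinity>" using im_Ioc_fin[OF mF rF, of a b] by simp
  show "AE x in interval_measure F. x \<in> A \<longrightarrow> norm (indicator A x *\<^sub>R g x) \<le> B" using B by simp
  show "AE x in interval_measure F. x \<notin> A \<longrightarrow> indicator A x *\<^sub>R g x = 0" by simp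
qed

lemma point_int:
  assumes "{c} \<in> sets M" "emeasure M {c} = 0"
  shows "(LINT u:{c}|M. f u) = 0"
proof -
  have "{c} \<in> null_sets M" using assms by (intro null_setsI)
  then have ae: "AE x in M. x \<notin> {c}" by (rule AE_not_in)
  show ?thesis
    unfolding set_lebesgue_integral_def
    by (rule integral_eq_zero_AE) (use ae in \<open>auto elim!: eventually_mono\<close>)
qed


lemma mv_cont: "continuous_on UNIV (\<lambda>p::((real^'m^'d) \<times> (real^'m)). fst p *v snd p)"
  unfolding matrix_vector_mult_def by (intro continuous_intros)

lemma mv_norm:
  fixes A :: "real^'m^'d"
  shows "norm (A *v x) \<le> real CARD('d) * real CARD('m) * norm A * norm x"
proof -
  have "norm (A *v x) \<le> onorm ((*v) A) * norm x" by (rule onorm) simp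
  also have "onorm ((*v) A) \<le> real CARD('d) * real CARD('m) * norm A"
    by (rule onorm_le_matrix_component, rule order_trans[OF component_le_norm_cart Finite_Cartesian_Product.norm_nth_le])
  finally show ?thesis by (simp add: mult_right_mono)
qed

lemma cont_comp2:
  fixes t T :: real
  assumes bc: "continuous_on ({0..T} \<times> C) (\<lambda>(t, x). b t x)"
    and Yc: "continuous_on {t..T} Y" and YC: "\<And>u. u \<in> {t..T} \<Longrightarrow> Y u \<in> C" and t0: "0 \<le> t"
  shows "continuous_on {t..T} (\<lambda>u. b u (Y u))"
proof -
  have "continuous_on {t..T} (\<lambda>u. (\<lambda>(t, x). b t x) (u, Y u))"
  proof (rule continuous_on_compose2[OF bc])
    show "continuous_on {t..T} (\<lambda>u. (u, Y u))" using Yc by (intro continuous_intros) auto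
    show "(\<lambda>u. (u, Y u)) ` {t..T} \<subseteq> {0..T} \<times> C"
    proof (rule image_subsetI)
      fix u assume u: "u \<in> {t..T}"
      then show "(u, Y u) \<in> {0..T} \<times> C" using YC[OF u] t0 by auto
    qed
  qed
  then show ?thesis by simp
qed

lemma L2_integrable:
  fixes \<alpha> :: "real \<Rightarrow> real^'m"
  assumes "\<alpha> \<in> L2 t T"
  shows "set_integrable lborel {t..T} \<alpha>"
proof -
  have m: "(\<lambda>u. indicator {t..T} u *\<^sub>R \<alpha> u) \<in> borel_measurable lborel"
    using assms unfolding L2_def set_borel_measurable_def by simp
  have i2: "set_integrable lborel {t..T} (\<lambda>s. (norm (\<alpha> s))\<^sup>2)" using assms unfolding L2_def by simp
  have i1: "set_integrable lborel {t..T} (\<lambda>s. 1::real)"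
    unfolding set_integrable_def
    by (rule integrableI_bounded_set_indicator[where B=1]) (auto simp: emeasure_lborel_Icc_eq)
  have i3: "set_integrable lborel {t..T} (\<lambda>s. 1 + (norm (\<alpha> s))\<^sup>2)" using i1 i2 by (rule set_integral_add)
  show ?thesis
    unfolding set_integrable_def
  proof (rule Bochner_Integration.integrable_bound[OF i3[unfolded set_integrable_def] m])
    show "AE x in lborel. norm (indicator {t..T} x *\<^sub>R \<alpha> x) \<le> norm (indicator {t..T} x *\<^sub>R (1 + (norm (\<alpha> x))\<^sup>2))"
    proof (rule AE_I2)
      fix x
      have "norm (\<alpha> x) \<le> 1 + (norm (\<alpha> x))\<^sup>2" by (smt (verit) power2_eq_square mult_le_cancel_left1 norm_ge_zero zero_le_power2)
      then show "norm (indicator {t..T} x *\<^sub>R \<alpha> x) \<le> norm (indicator {t..T} x *\<^sub>R (1 + (norm (\<alpha> x))\<^sup>2))"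
        by (auto split: split_indicator)
    qed
  qed
qed

lemma drift_int:
  fixes \<alpha> :: "real \<Rightarrow> real^'m" and Y :: "real \<Rightarrow> real^'d" and b :: "real \<Rightarrow> real^'d \<Rightarrow> real^'d"
    and \<sigma> :: "real \<Rightarrow> real^'d \<Rightarrow> real^'m^'d"
  assumes bc: "continuous_on ({0..T} \<times> C) (\<lambda>(t, x). b t x)"
    and sc: "continuous_on ({0..T} \<times> C) (\<lambda>(t, x). \<sigma> t x)"
    and Yc: "continuous_on {t..T} Y" and YC: "\<And>u. u \<in> {t..T} \<Longrightarrow> Y u \<in> C" and t0: "0 \<le> t"
    and \<alpha>: "\<alpha> \<in> L2 t T"
  shows "set_integrable lborel {t..T} (\<lambda>u. b u (Y u) - \<sigma> u (Y u) *v \<alpha> u)"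
proof (rule set_integral_diff(1))
  show "set_integrable lborel {t..T} (\<lambda>u. b u (Y u))"
    by (rule borel_integrable_atLeastAtMost'[OF cont_comp2[OF bc Yc YC t0]])
  have cs: "continuous_on {t..T} (\<lambda>u. \<sigma> u (Y u))" by (rule cont_comp2[OF sc Yc YC t0])
  obtain K where K0: "\<forall>u\<in>{t..T}. norm (\<sigma> u (Y u)) \<le> K"
    using compact_imp_bounded[OF compact_continuous_image[OF cs compact_Icc]]
    unfolding bounded_iff by auto
  then have K: "\<And>u. u \<in> {t..T} \<Longrightarrow> norm (\<sigma> u (Y u)) \<le> K" by blast
  have ai: "integrable lborel (\<lambda>u. indicator {t..T} u *\<^sub>R \<alpha> u)"
    using L2_integrable[OF \<alpha>] unfolding set_integrable_def .
  have sm: "(\<lambda>u. indicator {t..T} u *\<^sub>R \<sigma> u (Y u)) \<in> borel_measurable lborel"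
    using borel_measurable_continuous_on_indicator[OF _ cs] by simp
  have am: "(\<lambda>u. indicator {t..T} u *\<^sub>R \<alpha> u) \<in> borel_measurable lborel"
    using \<alpha> unfolding L2_def set_borel_measurable_def by simp
  have eq: "(\<lambda>u. indicator {t..T} u *\<^sub>R (\<sigma> u (Y u) *v \<alpha> u))
      = (\<lambda>u. (indicator {t..T} u *\<^sub>R \<sigma> u (Y u)) *v (indicator {t..T} u *\<^sub>R \<alpha> u))"
    by (rule ext) (auto split: split_indicator)
  have pm: "(\<lambda>u. indicator {t..T} u *\<^sub>R (\<sigma> u (Y u) *v \<alpha> u)) \<in> borel_measurable lborel"
    unfolding eq by (rule borel_measurable_continuous_Pair[OF sm am mv_cont])
  let ?C = "real CARD('d) * real CARD('m) * K"
  show "set_integrable lborel {t..T} (\<lambda>u. \<sigma> u (Y u) *v \<alpha> u)"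
    unfolding set_integrable_def
  proof (rule Bochner_Integration.integrable_bound[OF _ pm])
    show "integrable lborel (\<lambda>u. ?C * norm (indicator {t..T} u *\<^sub>R \<alpha> u))"
      using ai by (intro integrable_mult_right integrable_norm)
    show "AE x in lborel. norm (indicator {t..T} x *\<^sub>R (\<sigma> x (Y x) *v \<alpha> x))
        \<le> norm (?C * norm (indicator {t..T} x *\<^sub>R \<alpha> x))"
    proof (rule AE_I2)
      fix x
      show "norm (indicator {t..T} x *\<^sub>R (\<sigma> x (Y x) *v \<alpha> x)) \<le> norm (?C * norm (indicator {t..T} x *\<^sub>R \<alpha> x))"
      proof (cases "x \<in> {t..T}")
        case True
        have "norm (\<sigma> x (Y x) *v \<alpha> x) \<le> real CARD('d) * real CARD('m) * norm (\<sigma> x (Y x)) * norm (\<alpha> x)"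
          by (rule mv_norm)
        also have "\<dots> \<le> ?C * norm (\<alpha> x)"
          using K[OF True] by (intro mult_right_mono mult_left_mono) auto
        finally show ?thesis using True K[OF True] by simp
      qed simp
    qed
  qed
qed


lemma g_meas:
  fixes Y :: "real \<Rightarrow> real^'d" and \<gamma> :: "real^'d \<Rightarrow> real^'d"
  assumes Yc: "continuous_on {t..T} Y" and YC: "\<And>u. u \<in> {t..T} \<Longrightarrow> Y u \<in> closure Dom"
    and gc: "continuous_on (closure Dom) \<gamma>" and A: "A \<in> sets borel" "A \<subseteq> {t..T}"
  shows "(\<lambda>u. indicator A u *\<^sub>R (indicator (frontier Dom) (Y u) *\<^sub>R \<gamma> (Y u))) \<in> borel_measurable borel"
proof -
  define G where "G y = indicator (frontier Dom) y *\<^sub>R (indicator (closure Dom) y *\<^sub>R \<gamma> y)" for y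
  have Gm: "G \<in> borel_measurable borel"
    unfolding G_def
    by (intro borel_measurable_scaleR borel_measurable_indicator borel_measurable_continuous_on_indicator gc)
       (auto intro: frontier_closed)
  have Ym: "Y \<in> borel_measurable (restrict_space borel {t..T})"
    by (rule borel_measurable_continuous_on_restrict[OF Yc])
  have "(\<lambda>u. G (Y u)) \<in> borel_measurable (restrict_space borel {t..T})"
    using measurable_compose[OF Ym Gm] by (simp add: comp_def)
  then have m1: "(\<lambda>u. indicator {t..T} u *\<^sub>R G (Y u)) \<in> borel_measurable borel"
    by (subst (asm) borel_measurable_restrict_space_iff) auto
  have m2: "(\<lambda>u. indicator A u *\<^sub>R (indicator {t..T} u *\<^sub>R G (Y u))) \<in> borel_measurable borel"
    by (rule borel_measurable_scaleR[OF borel_measurable_indicator[OF A(1)] m1])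
  have fr: "frontier Dom \<subseteq> closure Dom" unfolding frontier_def by auto
  have eq: "indicator A u *\<^sub>R (indicator {t..T} u *\<^sub>R G (Y u)) = indicator A u *\<^sub>R (indicator (frontier Dom) (Y u) *\<^sub>R \<gamma> (Y u))" for u
  proof (cases "u \<in> A")
    case True
    then have "u \<in> {t..T}" using A by auto
    then show ?thesis using True YC fr unfolding G_def by (auto split: split_indicator)
  qed simp
  show ?thesis using m2 unfolding eq .
qed

lemma min_self: "(r::real) \<le> T \<Longrightarrow> min r T = r" by simp

lemma glue:
  fixes Dom :: "(real^'d) set" and \<gamma> :: "real^'d \<Rightarrow> real^'d" and b :: "real \<Rightarrow> real^'d \<Rightarrow> real^'d"
    and \<sigma> :: "real \<Rightarrow> real^'d \<Rightarrow> real^'m^'d" and \<alpha> \<beta> :: "real \<Rightarrow> real^'m"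
    and Y1 Y2 z1 z2 :: "real \<Rightarrow> real^'d"
  assumes bc: "continuous_on ({0..T} \<times> closure Dom) (\<lambda>(t, x). b t x)"
    and sc: "continuous_on ({0..T} \<times> closure Dom) (\<lambda>(t, x). \<sigma> t x)"
    and gc: "continuous_on (closure Dom) \<gamma>" and gB: "\<And>y. y \<in> closure Dom \<Longrightarrow> norm (\<gamma> y) \<le> Bg"
    and t0: "0 \<le> t" and t\<theta>: "t \<le> \<theta>" and \<theta>T: "\<theta> \<le> T"
    and s1: "refl_sol Dom \<gamma> b \<sigma> T t x \<alpha> Y1 z1" and a1: "\<alpha> \<in> L2 t T"
    and s2: "refl_sol Dom \<gamma> b \<sigma> T \<theta> (Y1 \<theta>) \<beta> Y2 z2" and a2: "\<beta> \<in> L2 \<theta> T"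
  shows "refl_sol Dom \<gamma> b \<sigma> T t x (\<lambda>u. if u \<le> \<theta> then \<alpha> u else \<beta> u)
           (\<lambda>u. if u \<le> \<theta> then Y1 u else Y2 u) (\<lambda>u. if u \<le> \<theta> then z1 u else z1 \<theta> + z2 u)"
proof -
  define ctl where "ctl = (\<lambda>u. if u \<le> \<theta> then \<alpha> u else \<beta> u)"
  define Y where "Y = (\<lambda>u. if u \<le> \<theta> then Y1 u else Y2 u)"
  define z where "z = (\<lambda>u. if u \<le> \<theta> then z1 u else z1 \<theta> + z2 u)"
  define F1 where "F1 = (\<lambda>r. total_variation z1 t (min r T))"
  define F2 where "F2 = (\<lambda>r. total_variation z2 \<theta> (min r T))"
  define F where "F = (\<lambda>r. total_variation z t (min r T))"
  define f1 where "f1 = (\<lambda>u. b u (Y1 u) - \<sigma> u (Y1 u) *v \<alpha> u)"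
  define f2 where "f2 = (\<lambda>u. b u (Y2 u) - \<sigma> u (Y2 u) *v \<beta> u)"
  define f where "f = (\<lambda>u. b u (Y u) - \<sigma> u (Y u) *v ctl u)"
  define g1 where "g1 = (\<lambda>u. indicator (frontier Dom) (Y1 u) *\<^sub>R \<gamma> (Y1 u))"
  define g2 where "g2 = (\<lambda>u. indicator (frontier Dom) (Y2 u) *\<^sub>R \<gamma> (Y2 u))"
  define g where "g = (\<lambda>u. indicator (frontier Dom) (Y u) *\<^sub>R \<gamma> (Y u))"
  have tT: "t \<le> T" using t\<theta> \<theta>T by simp
  have \<theta>0: "0 \<le> \<theta>" using t0 t\<theta> by simp
  have Y1c: "continuous_on {t..T} Y1" and z1c: "continuous_on {t..T} z1" and bv1: "bounded_variation_on z1 t T"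
    and e1: "\<And>s. s \<in> {t..T} \<Longrightarrow> Y1 s \<in> closure Dom \<and> Y1 s = x + (LINT u:{t..s}|lborel. f1 u) - z1 s
       \<and> z1 s = (LINT u:{t..s}|interval_measure F1. g1 u)"
    using s1 unfolding refl_sol_def f1_def F1_def g1_def by blast+
  have Y2c: "continuous_on {\<theta>..T} Y2" and z2c: "continuous_on {\<theta>..T} z2" and bv2: "bounded_variation_on z2 \<theta> T"
    and e2: "\<And>s. s \<in> {\<theta>..T} \<Longrightarrow> Y2 s \<in> closure Dom \<and> Y2 s = Y1 \<theta> + (LINT u:{\<theta>..s}|lborel. f2 u) - z2 s
       \<and> z2 s = (LINT u:{\<theta>..s}|interval_measure F2. g2 u)"
    using s2 unfolding refl_sol_def f2_def F2_def g2_def by blast+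
  have Y1C: "\<And>u. u \<in> {t..T} \<Longrightarrow> Y1 u \<in> closure Dom" using e1 by blast
  have Y2C: "\<And>u. u \<in> {\<theta>..T} \<Longrightarrow> Y2 u \<in> closure Dom" using e2 by blast
  have \<theta>in1: "\<theta> \<in> {t..T}" and \<theta>in2: "\<theta> \<in> {\<theta>..T}" using t\<theta> \<theta>T by auto
  have mF1: "\<And>x y. x \<le> y \<Longrightarrow> F1 x \<le> F1 y" unfolding F1_def using F_mono[OF bv1 tT] by blast
  have rF1: "\<And>a. continuous (at_right a) F1" unfolding F1_def using F_rc[OF z1c bv1 tT] by blast
  have mF2: "\<And>x y. x \<le> y \<Longrightarrow> F2 x \<le> F2 y" unfolding F2_def using F_mono[OF bv2 \<theta>T] by blast
  have rF2: "\<And>a. continuous (at_right a) F2" unfolding F2_def using F_rc[OF z2c bv2 \<theta>T] by blast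
  have F2lo: "F2 r = 0" if "r < \<theta>" for r
  proof -
    have n: "\<not> \<theta> \<le> min r T" using that by auto
    show ?thesis unfolding F2_def tv_def2 if_not_P[OF n] by simp
  qed
  have F2\<theta>: "F2 \<theta> = 0" unfolding F2_def using \<theta>T by (simp add: tv_refl)
  have mu2: "emeasure (interval_measure F2) {\<theta>} = 0"
  proof (rule im_point[OF mF2 rF2])
    have "F2 (\<theta> - 1) = 0" by (rule F2lo) simp
    then show "F2 \<theta> = F2 (\<theta> - 1)" using F2\<theta> by simp
  qed
  have z2\<theta>: "z2 \<theta> = 0"
    using e2[OF \<theta>in2] point_int[OF _ mu2, of g2] by simp
  have Y2\<theta>: "Y2 \<theta> = Y1 \<theta>"
    using e2[OF \<theta>in2] point_int[of \<theta> lborel f2] z2\<theta> by simp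
  have Tsplit: "{t..T} = {t..\<theta>} \<union> {\<theta>..T}" using t\<theta> \<theta>T by auto
  have Yc: "continuous_on {t..T} Y"
    unfolding Tsplit
  proof (rule continuous_on_closed_Un)
    show "continuous_on {t..\<theta>} Y"
    proof -
      have "continuous_on {t..\<theta>} Y1" using continuous_on_subset[OF Y1c, of "{t..\<theta>}"] \<theta>T by auto
      then show ?thesis by (rule continuous_on_eq) (auto simp: Y_def)
    qed
    show "continuous_on {\<theta>..T} Y"
      using Y2c by (rule continuous_on_eq) (auto simp: Y_def Y2\<theta>)
  qed auto
  have zc: "continuous_on {t..T} z"
    unfolding Tsplit
  proof (rule continuous_on_closed_Un)
    show "continuous_on {t..\<theta>} z"
    proof -
      have "continuous_on {t..\<theta>} z1" using continuous_on_subset[OF z1c, of "{t..\<theta>}"] \<theta>T by auto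
      then show ?thesis by (rule continuous_on_eq) (auto simp: z_def)
    qed
    have "continuous_on {\<theta>..T} (\<lambda>u. z1 \<theta> + z2 u)" using z2c by (intro continuous_intros)
    then show "continuous_on {\<theta>..T} z"
      by (rule continuous_on_eq) (auto simp: z_def z2\<theta>)
  qed auto
  have YC: "\<And>u. u \<in> {t..T} \<Longrightarrow> Y u \<in> closure Dom"
    using Y1C Y2C unfolding Y_def by auto
  have zeq1: "\<And>u. u \<in> {t..\<theta>} \<Longrightarrow> z u = 0 + z1 u" unfolding z_def by simp
  have zeq2: "\<And>u. u \<in> {\<theta>..T} \<Longrightarrow> z u = z1 \<theta> + z2 u" unfolding z_def using z2\<theta> by auto
  have tvz1: "total_variation z t r = total_variation z1 t r" "bounded_variation_on z t r \<longleftrightarrow> bounded_variation_on z1 t r"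
    if "r \<le> \<theta>" for r
    using tv_cong[of t r z 0 z1] zeq1 that by auto
  have tvz2: "total_variation z \<theta> r = total_variation z2 \<theta> r" "bounded_variation_on z \<theta> r \<longleftrightarrow> bounded_variation_on z2 \<theta> r"
    if "r \<le> T" for r
    using tv_cong[of \<theta> r z "z1 \<theta>" z2] zeq2 that by auto
  have bvz: "bounded_variation_on z t T"
    using bv_split[OF t\<theta> \<theta>T, of z] tvz1(2)[of \<theta>] tvz2(2)[of T] bv_sub[OF bv1 order_refl t\<theta> \<theta>T] bv2 by simp
  have mF: "\<And>x y. x \<le> y \<Longrightarrow> F x \<le> F y" unfolding F_def using F_mono[OF bvz tT] by blast
  have rF: "\<And>a. continuous (at_right a) F" unfolding F_def using F_rc[OF zc bvz tT] by blast
  have Feq1: "F r = F1 r + 0" if "r \<le> \<theta>" for r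
  proof (cases "t \<le> r")
    case True
    then show ?thesis unfolding F_def F1_def using that \<theta>T tvz1(1)[OF that] by (simp add: min_self)
  next
    case False
    then have n: "\<not> t \<le> min r T" by auto
    show ?thesis unfolding F_def F1_def tv_def2 if_not_P[OF n] by simp
  qed
  have Feq2: "F r = F2 r + F1 \<theta>" if "r \<in> {\<theta>..T}" for r
  proof -
    have r: "\<theta> \<le> r" "r \<le> T" using that by auto
    have "F r = total_variation z t r" unfolding F_def using r by (simp add: min_self)
    also have "\<dots> = total_variation z t \<theta> + total_variation z \<theta> r"
      by (rule tv_split[OF t\<theta> r(1) bv_sub[OF bvz order_refl _ r(2)]]) (use t\<theta> r in auto)
    also have "\<dots> = F1 \<theta> + F2 r"
      unfolding F1_def F2_def using tvz1(1)[of \<theta>] tvz2(1)[OF r(2)] r \<theta>T by (simp add: min_self)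
    finally show ?thesis by simp
  qed
  have if1: "set_integrable lborel {t..T} f1"
    unfolding f1_def by (rule drift_int[OF bc sc Y1c Y1C t0 a1])
  have if2: "set_integrable lborel {\<theta>..T} f2"
    unfolding f2_def by (rule drift_int[OF bc sc Y2c Y2C \<theta>0 a2])
  have ff1: "f u = f1 u" if "u \<le> \<theta>" for u using that unfolding f_def f1_def Y_def ctl_def by simp
  have ff2: "f u = f2 u" if "\<theta> < u" for u using that unfolding f_def f2_def Y_def ctl_def by simp
  have gg1: "g u = g1 u" if "u \<le> \<theta>" for u using that unfolding g_def g1_def Y_def by simp
  have gg2: "g u = g2 u" if "\<theta> < u" for u using that unfolding g_def g2_def Y_def by simp
  have gbound: "norm (g u) \<le> Bg" if "u \<in> {t..T}" for u
  proof -
    have "0 \<le> Bg" using gB[OF YC[OF that]] by (meson norm_ge_zero order_trans)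
    then show ?thesis unfolding g_def using gB[OF YC[OF that]] by (auto split: split_indicator)
  qed
  have zpart1: "(LINT u:{t..s}|interval_measure F. g u) = z1 s" if s: "s \<in> {t..\<theta>}" for s
  proof -
    have "(LINT u:{t..s}|interval_measure F. g u) = (LINT u:{t..s}|interval_measure F1. g u)"
    proof (rule im_agree[OF mF rF mF1 rF1, of "t - 1" \<theta> 0])
      show "\<And>x. x \<in> {t - 1..\<theta>} \<Longrightarrow> F x = F1 x + 0" using Feq1 by auto
      show "t - 1 \<le> \<theta>" using t\<theta> by simp
      show "{t..s} \<in> sets borel" by simp
      show "{t..s} \<subseteq> {t - 1<..\<theta>}" using s by auto
      show "(\<lambda>u. indicator {t..s} u *\<^sub>R g u) \<in> borel_measurable borel"
        unfolding g_def by (rule g_meas[OF Yc YC gc]) (use s \<theta>T in auto)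
    qed
    also have "\<dots> = (LINT u:{t..s}|interval_measure F1. g1 u)"
      by (rule set_lebesgue_integral_cong) (use s gg1 in auto)
    also have "\<dots> = z1 s" using e1[of s] s \<theta>T by auto
    finally show ?thesis .
  qed
  have main: "Y s = x + (LINT u:{t..s}|lborel. f u) - z s \<and> z s = (LINT u:{t..s}|interval_measure F. g u)"
    if s: "s \<in> {t..T}" for s
  proof (cases "s \<le> \<theta>")
    case True
    have sI: "s \<in> {t..\<theta>}" using s True by auto
    have "(LINT u:{t..s}|lborel. f u) = (LINT u:{t..s}|lborel. f1 u)"
      by (rule set_lebesgue_integral_cong) (use True ff1 in auto)
    then show ?thesis using e1[OF s] zpart1[OF sI] True unfolding Y_def z_def by simp
  next
    case False
    then have s\<theta>: "\<theta> < s" by simp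
    have sT: "s \<le> T" using s by simp
    have un1: "{t..s} = {t..\<theta>} \<union> {\<theta><..s}" using t\<theta> s\<theta> by auto
    have un2: "{\<theta>..s} = {\<theta>} \<union> {\<theta><..s}" using s\<theta> by auto
    have i1: "set_integrable lborel {t..\<theta>} f"
    proof -
      have "set_integrable lborel {t..\<theta>} f1" by (rule set_integrable_subset[OF if1]) (use \<theta>T in auto)
      then show ?thesis by (subst set_integrable_cong[OF refl refl, of _ _ f1]) (auto simp: ff1)
    qed
    have i2': "set_integrable lborel {\<theta><..s} f2" by (rule set_integrable_subset[OF if2]) (use sT in auto)
    have i2: "set_integrable lborel {\<theta><..s} f"
      using i2' by (subst set_integrable_cong[OF refl refl, of _ _ f2]) (auto simp: ff2)
    have ip: "set_integrable lborel {\<theta>} f2" by (rule set_integrable_subset[OF if2]) (use \<theta>T in auto)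
    have I1: "(LINT u:{t..s}|lborel. f u) = (LINT u:{t..\<theta>}|lborel. f1 u) + (LINT u:{\<theta><..s}|lborel. f2 u)"
    proof -
      have "(LINT u:{t..s}|lborel. f u) = (LINT u:{t..\<theta>}|lborel. f u) + (LINT u:{\<theta><..s}|lborel. f u)"
        unfolding un1 by (rule set_integral_Un[OF _ i1 i2]) auto
      also have "(LINT u:{t..\<theta>}|lborel. f u) = (LINT u:{t..\<theta>}|lborel. f1 u)"
        by (rule set_lebesgue_integral_cong) (use ff1 in auto)
      also have "(LINT u:{\<theta><..s}|lborel. f u) = (LINT u:{\<theta><..s}|lborel. f2 u)"
        by (rule set_lebesgue_integral_cong) (use ff2 in auto)
      finally show ?thesis .
    qed
    have I2: "(LINT u:{\<theta>..s}|lborel. f2 u) = (LINT u:{\<theta><..s}|lborel. f2 u)"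
    proof -
      have "(LINT u:{\<theta>..s}|lborel. f2 u) = (LINT u:{\<theta>}|lborel. f2 u) + (LINT u:{\<theta><..s}|lborel. f2 u)"
        unfolding un2 by (rule set_integral_Un[OF _ ip i2']) auto
      then show ?thesis using point_int[of \<theta> lborel f2] by simp
    qed
    have sets2: "{\<theta><..s} \<in> sets borel" by simp
    have gm2: "(\<lambda>u. indicator {\<theta><..s} u *\<^sub>R g u) \<in> borel_measurable borel"
      unfolding g_def by (rule g_meas[OF Yc YC gc]) (use t\<theta> sT in auto)
    have gm1: "(\<lambda>u. indicator {t..\<theta>} u *\<^sub>R g u) \<in> borel_measurable borel"
      unfolding g_def by (rule g_meas[OF Yc YC gc]) (use \<theta>T in auto)
    have ji1: "set_integrable (interval_measure F) {t..\<theta>} g"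
      by (rule im_integrable[OF mF rF _ _ gm1, of "t - 1" \<theta> Bg]) (use gbound \<theta>T in auto)
    have ji2: "set_integrable (interval_measure F) {\<theta><..s} g"
      by (rule im_integrable[OF mF rF _ _ gm2, of \<theta> s Bg]) (use gbound t\<theta> sT in auto)
    have J1: "(LINT u:{t..s}|interval_measure F. g u)
        = (LINT u:{t..\<theta>}|interval_measure F. g u) + (LINT u:{\<theta><..s}|interval_measure F. g u)"
      unfolding un1 by (rule set_integral_Un[OF _ ji1 ji2]) auto
    have J2: "(LINT u:{\<theta><..s}|interval_measure F. g u) = (LINT u:{\<theta><..s}|interval_measure F2. g u)"
      by (rule im_agree[OF mF rF mF2 rF2, of \<theta> s "F1 \<theta>"]) (use Feq2 sT s\<theta> gm2 in auto)
    have J3: "(LINT u:{\<theta><..s}|interval_measure F2. g u) = (LINT u:{\<theta><..s}|interval_measure F2. g2 u)"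
      by (rule set_lebesgue_integral_cong) (use gg2 in auto)
    have gm2': "(\<lambda>u. indicator {\<theta>..s} u *\<^sub>R g2 u) \<in> borel_measurable borel"
      unfolding g2_def by (rule g_meas[OF Y2c Y2C gc]) (use sT in auto)
    have gm2p: "(\<lambda>u. indicator {\<theta>} u *\<^sub>R g2 u) \<in> borel_measurable borel"
      unfolding g2_def by (rule g_meas[OF Y2c Y2C gc]) (use \<theta>T in auto)
    have gm2o: "(\<lambda>u. indicator {\<theta><..s} u *\<^sub>R g2 u) \<in> borel_measurable borel"
      unfolding g2_def by (rule g_meas[OF Y2c Y2C gc]) (use sT in auto)
    have g2bound: "norm (g2 u) \<le> Bg" if "u \<in> {\<theta>..T}" for u
    proof -
      have "0 \<le> Bg" using gB[OF Y2C[OF that]] by (meson norm_ge_zero order_trans)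
      then show ?thesis unfolding g2_def using gB[OF Y2C[OF that]] by (auto split: split_indicator)
    qed
    have ki1: "set_integrable (interval_measure F2) {\<theta>} g2"
      by (rule im_integrable[OF mF2 rF2 _ _ gm2p, of "\<theta> - 1" \<theta> Bg]) (use g2bound \<theta>T in auto)
    have ki2: "set_integrable (interval_measure F2) {\<theta><..s} g2"
      by (rule im_integrable[OF mF2 rF2 _ _ gm2o, of \<theta> s Bg]) (use g2bound sT in auto)
    have J4: "(LINT u:{\<theta>..s}|interval_measure F2. g2 u) = (LINT u:{\<theta><..s}|interval_measure F2. g2 u)"
    proof -
      have "(LINT u:{\<theta>..s}|interval_measure F2. g2 u)
          = (LINT u:{\<theta>}|interval_measure F2. g2 u) + (LINT u:{\<theta><..s}|interval_measure F2. g2 u)"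
        unfolding un2 by (rule set_integral_Un[OF _ ki1 ki2]) auto
      then show ?thesis using point_int[OF _ mu2, of g2] by simp
    qed
    have z1\<theta>: "(LINT u:{t..\<theta>}|interval_measure F. g u) = z1 \<theta>" using zpart1[of \<theta>] t\<theta> by simp
    have sI2: "s \<in> {\<theta>..T}" using s\<theta> sT by auto
    have zs: "z s = z1 \<theta> + z2 s" unfolding z_def using s\<theta> by simp
    have Ys: "Y s = Y2 s" unfolding Y_def using s\<theta> by simp
    have z2s: "z2 s = (LINT u:{\<theta><..s}|interval_measure F2. g2 u)" using e2[OF sI2] J4 by simp
    have zfin: "z s = (LINT u:{t..s}|interval_measure F. g u)"
      unfolding J1 J2 J3 z1\<theta> zs z2s ..
    have Y2s: "Y2 s = Y1 \<theta> + (LINT u:{\<theta><..s}|lborel. f2 u) - z2 s" using e2[OF sI2] I2 by simp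
    have Y1t: "Y1 \<theta> = x + (LINT u:{t..\<theta>}|lborel. f1 u) - z1 \<theta>" using e1[OF \<theta>in1] by simp
    have Yfin: "Y s = x + (LINT u:{t..s}|lborel. f u) - z s"
      unfolding Ys Y2s Y1t I1 zs by (simp add: algebra_simps)
    show ?thesis using zfin Yfin by simp
  qed
  have "refl_sol Dom \<gamma> b \<sigma> T t x ctl Y z"
    unfolding refl_sol_def
  proof (intro conjI ballI Yc zc bvz)
    fix s assume s: "s \<in> {t..T}"
    show "Y s \<in> closure Dom" by (rule YC[OF s])
    show "Y s = x + (LINT u:{t..s}|lborel. b u (Y u) - \<sigma> u (Y u) *v ctl u) - z s"
      using main[OF s] unfolding f_def by simp
    show "z s = (LINT u:{t..s}|interval_measure (\<lambda>r. total_variation z t (min r T)).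
                 indicator (frontier Dom) (Y u) *\<^sub>R \<gamma> (Y u))"
      using main[OF s] unfolding F_def g_def by simp
  qed
  then show ?thesis unfolding ctl_def Y_def z_def .
qed


lemma sol_start:
  assumes s2: "refl_sol Dom \<gamma> b \<sigma> T \<theta> y0 \<beta> Y2 z2" and \<theta>T: "\<theta> \<le> T"
  shows "Y2 \<theta> = y0"
proof -
  define F2 where "F2 = (\<lambda>r. total_variation z2 \<theta> (min r T))"
  have z2c: "continuous_on {\<theta>..T} z2" and bv2: "bounded_variation_on z2 \<theta> T"
    and e2: "Y2 \<theta> = y0 + (LINT u:{\<theta>..\<theta>}|lborel. b u (Y2 u) - \<sigma> u (Y2 u) *v \<beta> u) - z2 \<theta>"
       "z2 \<theta> = (LINT u:{\<theta>..\<theta>}|interval_measure F2. indicator (frontier Dom) (Y2 u) *\<^sub>R \<gamma> (Y2 u))"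
    using s2 \<theta>T unfolding refl_sol_def F2_def by auto
  have mF2: "\<And>x y. x \<le> y \<Longrightarrow> F2 x \<le> F2 y" unfolding F2_def using F_mono[OF bv2 \<theta>T] by blast
  have rF2: "\<And>a. continuous (at_right a) F2" unfolding F2_def using F_rc[OF z2c bv2 \<theta>T] by blast
  have n: "\<not> \<theta> \<le> min (\<theta> - 1) T" by auto
  have "F2 (\<theta> - 1) = 0" unfolding F2_def tv_def2 if_not_P[OF n] by simp
  moreover have "F2 \<theta> = 0" unfolding F2_def using \<theta>T by (simp add: tv_refl)
  ultimately have eqF: "F2 \<theta> = F2 (\<theta> - 1)" by metis
  have mu2: "emeasure (interval_measure F2) {\<theta>} = 0"
    using im_point[OF mF2 rF2 eqF] .
  have "z2 \<theta> = 0" using e2(2) point_int[OF _ mu2] by simp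
  then show ?thesis using e2(1) point_int[of \<theta> lborel] by simp
qed

lemma L2_sub:
  assumes a: "\<alpha> \<in> L2 t T" and tr: "t \<le> r"
  shows "\<alpha> \<in> L2 r T"
proof -
  have m: "(\<lambda>u. indicator {t..T} u *\<^sub>R \<alpha> u) \<in> borel_measurable lborel"
    and i: "set_integrable lborel {t..T} (\<lambda>s. (norm (\<alpha> s))\<^sup>2)"
    using a unfolding L2_def set_borel_measurable_def by auto
  have eq: "(\<lambda>u. indicator {r..T} u *\<^sub>R \<alpha> u) = (\<lambda>u. indicator {r..T} u *\<^sub>R (indicator {t..T} u *\<^sub>R \<alpha> u))"
    using tr by (auto split: split_indicator)
  have "(\<lambda>u. indicator {r..T} u *\<^sub>R \<alpha> u) \<in> borel_measurable lborel"
    unfolding eq by (rule borel_measurable_scaleR[OF borel_measurable_indicator m]) simp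
  moreover have "set_integrable lborel {r..T} (\<lambda>s. (norm (\<alpha> s))\<^sup>2)"
    by (rule set_integrable_subset[OF i]) (use tr in auto)
  ultimately show ?thesis unfolding L2_def set_borel_measurable_def by simp
qed

lemma L2_zero: "(\<lambda>_. 0) \<in> L2 t T"
  unfolding L2_def set_borel_measurable_def set_integrable_def by simp

lemma L2_glue:
  fixes \<alpha> \<beta> :: "real \<Rightarrow> real^'m"
  assumes a: "\<alpha> \<in> L2 t T" and b: "\<beta> \<in> L2 r T" and tr: "t \<le> r"
  shows "(\<lambda>u. if u \<le> r then \<alpha> u else \<beta> u) \<in> L2 t T"
proof -
  define c where "c = (\<lambda>u. if u \<le> r then \<alpha> u else \<beta> u)"
  have ma: "(\<lambda>u. indicator {t..T} u *\<^sub>R \<alpha> u) \<in> borel_measurable lborel"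
    and ia: "set_integrable lborel {t..T} (\<lambda>s. (norm (\<alpha> s))\<^sup>2)"
    using a unfolding L2_def set_borel_measurable_def by auto
  have mb: "(\<lambda>u. indicator {r..T} u *\<^sub>R \<beta> u) \<in> borel_measurable lborel"
    and ib: "set_integrable lborel {r..T} (\<lambda>s. (norm (\<beta> s))\<^sup>2)"
    using b unfolding L2_def set_borel_measurable_def by auto
  have eq: "(\<lambda>u. indicator {t..T} u *\<^sub>R c u) = (\<lambda>u. indicator {t..r} u *\<^sub>R (indicator {t..T} u *\<^sub>R \<alpha> u)
      + indicator {r<..T} u *\<^sub>R (indicator {r..T} u *\<^sub>R \<beta> u))"
    using tr unfolding c_def by (auto split: split_indicator)
  have "(\<lambda>u. indicator {t..T} u *\<^sub>R c u) \<in> borel_measurable lborel"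
    unfolding eq
    by (intro borel_measurable_add borel_measurable_scaleR[OF borel_measurable_indicator ma]
        borel_measurable_scaleR[OF borel_measurable_indicator mb]) simp_all
  moreover have "set_integrable lborel {t..T} (\<lambda>s. (norm (c s))\<^sup>2)"
  proof (cases "r \<le> T")
    case True
    have un: "{t..T} = {t..r} \<union> {r<..T}" using tr True by auto
    have i1: "set_integrable lborel {t..r} (\<lambda>s. (norm (c s))\<^sup>2)"
    proof -
      have "set_integrable lborel {t..r} (\<lambda>s. (norm (\<alpha> s))\<^sup>2)"
        by (rule set_integrable_subset[OF ia]) (use True in auto)
      then show ?thesis by (subst set_integrable_cong[OF refl refl, of _ _ "\<lambda>s. (norm (\<alpha> s))\<^sup>2"]) (auto simp: c_def)
    qed
    have i2: "set_integrable lborel {r<..T} (\<lambda>s. (norm (c s))\<^sup>2)"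
    proof -
      have "set_integrable lborel {r<..T} (\<lambda>s. (norm (\<beta> s))\<^sup>2)"
        by (rule set_integrable_subset[OF ib]) auto
      then show ?thesis by (subst set_integrable_cong[OF refl refl, of _ _ "\<lambda>s. (norm (\<beta> s))\<^sup>2"]) (auto simp: c_def)
    qed
    show ?thesis unfolding un by (rule set_integrable_Un[OF i1 i2]) auto
  next
    case False
    have "set_integrable lborel {t..T} (\<lambda>s. (norm (\<alpha> s))\<^sup>2)" by (rule ia)
    then show ?thesis using False by (subst set_integrable_cong[OF refl refl, of _ _ "\<lambda>s. (norm (\<alpha> s))\<^sup>2"]) (auto simp: c_def)
  qed
  ultimately show ?thesis unfolding L2_def set_borel_measurable_def c_def by simp
qed

lemma int_split:
  fixes h :: "real \<Rightarrow> real"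
  assumes i: "set_integrable lborel {t..T} h" and r: "t \<le> r" "r \<le> M" "M \<le> T"
  shows "(LINT u:{t..M}|lborel. h u) = (LINT u:{t..r}|lborel. h u) + (LINT u:{r..M}|lborel. h u)"
proof -
  have i1: "set_integrable lborel {t..r} h" by (rule set_integrable_subset[OF i]) (use r in auto)
  have i2: "set_integrable lborel {r<..M} h" by (rule set_integrable_subset[OF i]) (use r in auto)
  have i3: "set_integrable lborel {r} h" by (rule set_integrable_subset[OF i]) (use r in auto)
  have "(LINT u:{t..M}|lborel. h u) = (LINT u:{t..r}|lborel. h u) + (LINT u:{r<..M}|lborel. h u)"
  proof -
    have un: "{t..M} = {t..r} \<union> {r<..M}" using r by auto
    show ?thesis unfolding un by (rule set_integral_Un[OF _ i1 i2]) auto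
  qed
  moreover have "(LINT u:{r..M}|lborel. h u) = (LINT u:{r}|lborel. h u) + (LINT u:{r<..M}|lborel. h u)"
  proof -
    have un: "{r..M} = {r} \<union> {r<..M}" using r by auto
    show ?thesis unfolding un by (rule set_integral_Un[OF _ i3 i2]) auto
  qed
  moreover have "(LINT u:{r}|lborel. h u) = 0" by (rule point_int) auto
  ultimately show ?thesis by simp
qed

lemma int_split_glue:
  fixes \<alpha> \<beta> :: "real \<Rightarrow> real^'m"
  assumes a: "\<alpha> \<in> L2 t T" and b: "\<beta> \<in> L2 r T" and r: "t \<le> r" "r \<le> M" "M \<le> T"
  shows "(LINT u:{t..M}|lborel. (norm (if u \<le> r then \<alpha> u else \<beta> u))\<^sup>2)
       = (LINT u:{t..r}|lborel. (norm (\<alpha> u))\<^sup>2) + (LINT u:{r..M}|lborel. (norm (\<beta> u))\<^sup>2)"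
proof -
  define c where "c = (\<lambda>u. if u \<le> r then \<alpha> u else \<beta> u)"
  have ic: "set_integrable lborel {t..T} (\<lambda>u. (norm (c u))\<^sup>2)"
    using L2_glue[OF a b r(1)] unfolding L2_def c_def by simp
  have ib: "set_integrable lborel {r..T} (\<lambda>u. (norm (\<beta> u))\<^sup>2)" using b unfolding L2_def by simp
  have ic1: "set_integrable lborel {t..r} (\<lambda>u. (norm (c u))\<^sup>2)" by (rule set_integrable_subset[OF ic]) (use r in auto)
  have ic2: "set_integrable lborel {r<..M} (\<lambda>u. (norm (c u))\<^sup>2)" by (rule set_integrable_subset[OF ic]) (use r in auto)
  have ib2: "set_integrable lborel {r<..M} (\<lambda>u. (norm (\<beta> u))\<^sup>2)" by (rule set_integrable_subset[OF ib]) (use r in auto)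
  have ib3: "set_integrable lborel {r} (\<lambda>u. (norm (\<beta> u))\<^sup>2)" by (rule set_integrable_subset[OF ib]) (use r in auto)
  have un1: "{t..M} = {t..r} \<union> {r<..M}" using r by auto
  have un2: "{r..M} = {r} \<union> {r<..M}" using r by auto
  have "(LINT u:{t..M}|lborel. (norm (c u))\<^sup>2) = (LINT u:{t..r}|lborel. (norm (c u))\<^sup>2) + (LINT u:{r<..M}|lborel. (norm (c u))\<^sup>2)"
    unfolding un1 by (rule set_integral_Un[OF _ ic1 ic2]) auto
  also have "(LINT u:{t..r}|lborel. (norm (c u))\<^sup>2) = (LINT u:{t..r}|lborel. (norm (\<alpha> u))\<^sup>2)"
    by (rule set_lebesgue_integral_cong) (auto simp: c_def)
  also have "(LINT u:{r<..M}|lborel. (norm (c u))\<^sup>2) = (LINT u:{r<..M}|lborel. (norm (\<beta> u))\<^sup>2)"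
    by (rule set_lebesgue_integral_cong) (auto simp: c_def)
  also have "(LINT u:{r<..M}|lborel. (norm (\<beta> u))\<^sup>2) = (LINT u:{r..M}|lborel. (norm (\<beta> u))\<^sup>2)"
  proof -
    have "(LINT u:{r..M}|lborel. (norm (\<beta> u))\<^sup>2) = (LINT u:{r}|lborel. (norm (\<beta> u))\<^sup>2) + (LINT u:{r<..M}|lborel. (norm (\<beta> u))\<^sup>2)"
      unfolding un2 by (rule set_integral_Un[OF _ ib3 ib2]) auto
    moreover have "(LINT u:{r}|lborel. (norm (\<beta> u))\<^sup>2) = 0" by (rule point_int) auto
    ultimately show ?thesis by simp
  qed
  finally show ?thesis unfolding c_def .
qed


lemma sq_int_nonneg: "0 \<le> (LINT u:A|lborel. (norm (\<alpha> u :: real^'m))\<^sup>2)"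
  unfolding set_lebesgue_integral_def by (rule integral_nonneg_AE) (auto split: split_indicator)

locale S =
  fixes Dom :: "(real^'d) set" and \<gamma> :: "real^'d \<Rightarrow> real^'d" and b :: "real \<Rightarrow> real^'d \<Rightarrow> real^'d"
    and \<sigma> :: "real \<Rightarrow> real^'d \<Rightarrow> real^'m^'d" and T :: real and \<psi> :: "nat \<Rightarrow> real \<Rightarrow> real^'d \<Rightarrow> real"
    and B :: "nat \<Rightarrow> real" and Bg :: real
  assumes bc: "continuous_on ({0..T} \<times> closure Dom) (\<lambda>(t, x). b t x)"
    and sc: "continuous_on ({0..T} \<times> closure Dom) (\<lambda>(t, x). \<sigma> t x)"
    and gc: "continuous_on (closure Dom) \<gamma>" and gB: "\<And>y. y \<in> closure Dom \<Longrightarrow> norm (\<gamma> y) \<le> Bg"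
    and WP: "\<forall>t\<in>{0..T}. \<forall>x\<in>closure Dom. \<forall>\<alpha>\<in>(L2 t T :: (real \<Rightarrow> real^'m) set).
        \<exists>Y z. refl_sol Dom \<gamma> b \<sigma> T t x \<alpha> Y z \<and>
          (\<forall>Y' z'. refl_sol Dom \<gamma> b \<sigma> T t x \<alpha> Y' z' \<longrightarrow> (\<forall>s\<in>{t..T}. Y' s = Y s))"
    and \<psi>B: "\<And>i s y. s \<in> {0..T} \<Longrightarrow> y \<in> closure Dom \<Longrightarrow> \<bar>\<psi> i s y\<bar> \<le> B i"
begin

lemma Ysol_eq:
  assumes t: "t \<in> {0..T}" and x: "x \<in> closure Dom" and a: "\<alpha> \<in> L2 t T"
    and sol: "refl_sol Dom \<gamma> b \<sigma> T t x \<alpha> Y z" and s: "s \<in> {t..T}"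
  shows "Ysol Dom \<gamma> b \<sigma> T t x \<alpha> s = Y s"
proof -
  obtain Y0 z0 where s0: "refl_sol Dom \<gamma> b \<sigma> T t x \<alpha> Y0 z0"
    and u: "\<And>Y' z'. refl_sol Dom \<gamma> b \<sigma> T t x \<alpha> Y' z' \<Longrightarrow> (\<forall>s\<in>{t..T}. Y' s = Y0 s)"
    using WP t x a by blast
  show ?thesis
    unfolding Ysol_def
  proof (rule the_equality)
    show "\<exists>Y' z'. refl_sol Dom \<gamma> b \<sigma> T t x \<alpha> Y' z' \<and> Y' s = Y s" using sol by blast
    fix y assume "\<exists>Y' z'. refl_sol Dom \<gamma> b \<sigma> T t x \<alpha> Y' z' \<and> Y' s = y"
    then obtain Y' z' where "refl_sol Dom \<gamma> b \<sigma> T t x \<alpha> Y' z'" "Y' s = y" by blast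
    then show "y = Y s" using u[of Y' z'] u[OF sol] s by auto
  qed
qed

lemma sol_ex:
  assumes t: "t \<in> {0..T}" and x: "x \<in> closure Dom" and a: "\<alpha> \<in> L2 t T"
  obtains Y z where "refl_sol Dom \<gamma> b \<sigma> T t x \<alpha> Y z" "\<And>s. s \<in> {t..T} \<Longrightarrow> Ysol Dom \<gamma> b \<sigma> T t x \<alpha> s = Y s"
proof -
  obtain Y z where "refl_sol Dom \<gamma> b \<sigma> T t x \<alpha> Y z" using WP t x a by blast
  then show ?thesis using Ysol_eq[OF t x a] that by blast
qed

lemma Ys_in:
  assumes t: "t \<in> {0..T}" and x: "x \<in> closure Dom" and a: "\<alpha> \<in> L2 t T" and s: "s \<in> {t..T}"
  shows "Ysol Dom \<gamma> b \<sigma> T t x \<alpha> s \<in> closure Dom"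
proof -
  obtain Y z where "refl_sol Dom \<gamma> b \<sigma> T t x \<alpha> Y z" "\<And>s. s \<in> {t..T} \<Longrightarrow> Ysol Dom \<gamma> b \<sigma> T t x \<alpha> s = Y s"
    using sol_ex[OF t x a] by blast
  then have "Y s \<in> closure Dom" using s unfolding refl_sol_def by blast
  then show ?thesis using \<open>\<And>s. s \<in> {t..T} \<Longrightarrow> Ysol Dom \<gamma> b \<sigma> T t x \<alpha> s = Y s\<close> s by simp
qed

lemma concat:
  assumes t: "t \<in> {0..T}" and x: "x \<in> closure Dom" and a: "\<alpha> \<in> L2 t T"
    and r: "r \<in> {t..T}" and be: "\<beta> \<in> L2 r T"
  shows "\<And>s. s \<in> {t..r} \<Longrightarrow> Ysol Dom \<gamma> b \<sigma> T t x (\<lambda>u. if u \<le> r then \<alpha> u else \<beta> u) s = Ysol Dom \<gamma> b \<sigma> T t x \<alpha> s"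
    and "\<And>s. s \<in> {r..T} \<Longrightarrow> Ysol Dom \<gamma> b \<sigma> T t x (\<lambda>u. if u \<le> r then \<alpha> u else \<beta> u) s
            = Ysol Dom \<gamma> b \<sigma> T r (Ysol Dom \<gamma> b \<sigma> T t x \<alpha> r) \<beta> s"
proof -
  obtain Y1 z1 where s1: "refl_sol Dom \<gamma> b \<sigma> T t x \<alpha> Y1 z1"
    and e1: "\<And>s. s \<in> {t..T} \<Longrightarrow> Ysol Dom \<gamma> b \<sigma> T t x \<alpha> s = Y1 s"
    using sol_ex[OF t x a] by blast
  have r0: "r \<in> {0..T}" using r t by auto
  have yr: "Ysol Dom \<gamma> b \<sigma> T t x \<alpha> r = Y1 r" using e1 r by simp
  have yC: "Y1 r \<in> closure Dom" using Ys_in[OF t x a r] yr by simp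
  obtain Y2 z2 where s2: "refl_sol Dom \<gamma> b \<sigma> T r (Y1 r) \<beta> Y2 z2"
    and e2: "\<And>s. s \<in> {r..T} \<Longrightarrow> Ysol Dom \<gamma> b \<sigma> T r (Y1 r) \<beta> s = Y2 s"
    using sol_ex[OF r0 yC be] by blast
  have g: "refl_sol Dom \<gamma> b \<sigma> T t x (\<lambda>u. if u \<le> r then \<alpha> u else \<beta> u)
           (\<lambda>u. if u \<le> r then Y1 u else Y2 u) (\<lambda>u. if u \<le> r then z1 u else z1 r + z2 u)"
    by (rule glue[OF bc sc gc gB _ _ _ s1 a s2 be]) (use t r in auto)
  have c: "(\<lambda>u. if u \<le> r then \<alpha> u else \<beta> u) \<in> L2 t T" using L2_glue[OF a be] r by auto
  have st: "Y2 r = Y1 r" using sol_start[OF s2] r by auto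
  show "Ysol Dom \<gamma> b \<sigma> T t x (\<lambda>u. if u \<le> r then \<alpha> u else \<beta> u) s = Ysol Dom \<gamma> b \<sigma> T t x \<alpha> s"
    if "s \<in> {t..r}" for s
    using Ysol_eq[OF t x c g, of s] e1[of s] that r by auto
  show "Ysol Dom \<gamma> b \<sigma> T t x (\<lambda>u. if u \<le> r then \<alpha> u else \<beta> u) s
            = Ysol Dom \<gamma> b \<sigma> T r (Ysol Dom \<gamma> b \<sigma> T t x \<alpha> r) \<beta> s"
    if "s \<in> {r..T}" for s
    using Ysol_eq[OF t x c g, of s] e2[of s] that r st yr by auto
qed

lemma restart:
  assumes t: "t \<in> {0..T}" and x: "x \<in> closure Dom" and a: "\<alpha> \<in> L2 t T"
    and r: "r \<in> {t..T}" and s: "s \<in> {r..T}"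
  shows "Ysol Dom \<gamma> b \<sigma> T r (Ysol Dom \<gamma> b \<sigma> T t x \<alpha> r) \<alpha> s = Ysol Dom \<gamma> b \<sigma> T t x \<alpha> s"
  using concat(2)[OF t x a r L2_sub[OF a] s] r by simp

end


lemma INF_pair_le:
  fixes f :: "'a \<Rightarrow> 'b \<Rightarrow> real"
  assumes lb: "\<And>a c. P a c \<Longrightarrow> m \<le> f a c" and P: "P aa cc"
  shows "(INF p\<in>{(a, c). P a c}. case p of (a, c) \<Rightarrow> f a c) \<le> f aa cc"
proof -
  have "bdd_below ((\<lambda>p. case p of (a, c) \<Rightarrow> f a c) ` {(a, c). P a c})"
    by (rule bdd_belowI[where m=m]) (auto intro: lb)
  moreover have "(aa, cc) \<in> {(a, c). P a c}" using P by simp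
  ultimately show ?thesis by (metis (no_types, lifting) cINF_lower case_prod_conv)
qed

lemma INF_pair_ge:
  fixes f :: "'a \<Rightarrow> 'b \<Rightarrow> real"
  assumes lb: "\<And>a c. P a c \<Longrightarrow> m \<le> f a c" and P: "P aa cc"
  shows "m \<le> (INF p\<in>{(a, c). P a c}. case p of (a, c) \<Rightarrow> f a c)"
proof (rule cINF_greatest)
  show "{(a, c). P a c} \<noteq> {}" using P by auto
  fix p assume "p \<in> {(a, c). P a c}"
  then show "m \<le> (case p of (a, c) \<Rightarrow> f a c)" using lb by auto
qed

context S begin

lemma cost_lb:
  assumes t: "t \<in> {0..T}" and x: "x \<in> closure Dom" and a: "\<alpha> \<in> L2 t T"
    and th: "\<forall>i\<in>J. \<theta> i \<in> {t..T}"
  shows "-(\<Sum>i\<in>J. B i) \<le> (1/2) * (LINT s:{t..Max (\<theta> ` J)}|lborel. (norm (\<alpha> s))\<^sup>2)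
          + (\<Sum>i\<in>J. \<psi> i (\<theta> i) (Ysol Dom \<gamma> b \<sigma> T t x \<alpha> (\<theta> i)))"
proof -
  have "(\<Sum>i\<in>J. - B i) \<le> (\<Sum>i\<in>J. \<psi> i (\<theta> i) (Ysol Dom \<gamma> b \<sigma> T t x \<alpha> (\<theta> i)))"
  proof (rule sum_mono)
    fix i assume i: "i \<in> J"
    have "\<theta> i \<in> {0..T}" using th i t by auto
    moreover have "Ysol Dom \<gamma> b \<sigma> T t x \<alpha> (\<theta> i) \<in> closure Dom" using Ys_in[OF t x a] th i by auto
    ultimately show "- B i \<le> \<psi> i (\<theta> i) (Ysol Dom \<gamma> b \<sigma> T t x \<alpha> (\<theta> i))"
      using \<psi>B by (metis abs_le_iff minus_le_iff)
  qed
  moreover have "0 \<le> (LINT s:{t..Max (\<theta> ` J)}|lborel. (norm (\<alpha> s))\<^sup>2)" by (rule sq_int_nonneg)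
  ultimately show ?thesis by (simp add: sum_negf)
qed

lemma v_le:
  assumes t: "t \<in> {0..T}" and x: "x \<in> closure Dom" and a: "\<alpha> \<in> L2 t T"
    and th: "\<forall>i\<in>J. \<theta> i \<in> {t..T}"
  shows "vI Dom \<gamma> b \<sigma> T \<psi> J t x \<le> (1/2) * (LINT s:{t..Max (\<theta> ` J)}|lborel. (norm (\<alpha> s))\<^sup>2)
          + (\<Sum>i\<in>J. \<psi> i (\<theta> i) (Ysol Dom \<gamma> b \<sigma> T t x \<alpha> (\<theta> i)))"
  unfolding vI_def
  by (rule INF_pair_le[where P="\<lambda>\<alpha> \<theta>. \<alpha> \<in> L2 t T \<and> (\<forall>i\<in>J. \<theta> i \<in> {t..T})"
        and f="\<lambda>\<alpha> \<theta>. (1/2) * (LINT s:{t..Max (\<theta> ` J)}|lborel. (norm (\<alpha> s))\<^sup>2)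
          + (\<Sum>i\<in>J. \<psi> i (\<theta> i) (Ysol Dom \<gamma> b \<sigma> T t x \<alpha> (\<theta> i)))" and m="-(\<Sum>i\<in>J. B i)"])
     (use cost_lb[OF t x] a th in auto)

lemma v_ge:
  assumes t: "t \<in> {0..T}"
    and H: "\<And>\<alpha> \<theta>. \<alpha> \<in> L2 t T \<Longrightarrow> \<forall>i\<in>J. \<theta> i \<in> {t..T} \<Longrightarrow>
       m \<le> (1/2) * (LINT s:{t..Max (\<theta> ` J)}|lborel. (norm (\<alpha> s))\<^sup>2)
          + (\<Sum>i\<in>J. \<psi> i (\<theta> i) (Ysol Dom \<gamma> b \<sigma> T t x \<alpha> (\<theta> i)))"
  shows "m \<le> vI Dom \<gamma> b \<sigma> T \<psi> J t x"
  unfolding vI_def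
  by (rule INF_pair_ge[where P="\<lambda>\<alpha> \<theta>. \<alpha> \<in> L2 t T \<and> (\<forall>i\<in>J. \<theta> i \<in> {t..T})"
        and f="\<lambda>\<alpha> \<theta>. (1/2) * (LINT s:{t..Max (\<theta> ` J)}|lborel. (norm (\<alpha> s))\<^sup>2)
          + (\<Sum>i\<in>J. \<psi> i (\<theta> i) (Ysol Dom \<gamma> b \<sigma> T t x \<alpha> (\<theta> i)))" and aa="\<lambda>_. 0" and cc="\<lambda>_. t"])
     (use H L2_zero[of t T] t in auto)

lemma v_lb:
  assumes t: "t \<in> {0..T}" and x: "x \<in> closure Dom"
  shows "-(\<Sum>i\<in>J. B i) \<le> vI Dom \<gamma> b \<sigma> T \<psi> J t x"
  by (rule v_ge[OF t]) (rule cost_lb[OF t x])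

lemma phi_lb:
  assumes I: "finite I" "I \<noteq> {}" and r: "r \<in> {0..T}" and y: "y \<in> closure Dom"
  shows "-(\<Sum>i\<in>I. B i) \<le> phiI Dom \<gamma> b \<sigma> T \<psi> I r y"
proof (cases "card I = 1")
  case True
  then obtain i where i: "I = {i}" by (auto simp: card_Suc_eq)
  then show ?thesis unfolding phiI_def using \<psi>B[OF r y, of i] by simp
next
  case False
  have "-(\<Sum>i\<in>I. B i) \<le> Min ((\<lambda>i. \<psi> i r y + vI Dom \<gamma> b \<sigma> T \<psi> (I - {i}) r y) ` I)"
  proof (rule Min.boundedI)
    show "finite ((\<lambda>i. \<psi> i r y + vI Dom \<gamma> b \<sigma> T \<psi> (I - {i}) r y) ` I)" using I by simp
    show "(\<lambda>i. \<psi> i r y + vI Dom \<gamma> b \<sigma> T \<psi> (I - {i}) r y) ` I \<noteq> {}" using I by simp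
    fix v assume "v \<in> (\<lambda>i. \<psi> i r y + vI Dom \<gamma> b \<sigma> T \<psi> (I - {i}) r y) ` I"
    then obtain i where i: "i \<in> I" "v = \<psi> i r y + vI Dom \<gamma> b \<sigma> T \<psi> (I - {i}) r y" by auto
    have "-(\<Sum>i\<in>I - {i}. B i) \<le> vI Dom \<gamma> b \<sigma> T \<psi> (I - {i}) r y" by (rule v_lb[OF r y])
    moreover have "- B i \<le> \<psi> i r y" using \<psi>B[OF r y, of i] by linarith
    moreover have "(\<Sum>i\<in>I. B i) = B i + (\<Sum>i\<in>I - {i}. B i)" using sum.remove[OF I(1) i(1)] .
    ultimately show "-(\<Sum>i\<in>I. B i) \<le> v" using i(2) by linarith
  qed
  then show ?thesis unfolding phiI_def using False by simp
qed

lemma u_le: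
  assumes t: "t \<in> {0..T}" and x: "x \<in> closure Dom" and I: "finite I" "I \<noteq> {}"
    and a: "\<alpha> \<in> L2 t T" and r: "r \<in> {t..T}"
  shows "uI Dom \<gamma> b \<sigma> T \<psi> I t x \<le> (1/2) * (LINT s:{t..r}|lborel. (norm (\<alpha> s))\<^sup>2)
          + phiI Dom \<gamma> b \<sigma> T \<psi> I r (Ysol Dom \<gamma> b \<sigma> T t x \<alpha> r)"
  unfolding uI_def
proof (rule INF_pair_le[where P="\<lambda>\<alpha> \<theta>. \<alpha> \<in> L2 t T \<and> \<theta> \<in> {t..T}"
        and f="\<lambda>\<alpha> \<theta>. (1/2) * (LINT s:{t..\<theta>}|lborel. (norm (\<alpha> s))\<^sup>2)
          + phiI Dom \<gamma> b \<sigma> T \<psi> I \<theta> (Ysol Dom \<gamma> b \<sigma> T t x \<alpha> \<theta>)" and m="-(\<Sum>i\<in>I. B i)"])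
  show "\<alpha> \<in> L2 t T \<and> r \<in> {t..T}" using a r by simp
  fix \<alpha>' :: "real \<Rightarrow> real^'m" and \<theta>' :: real assume p: "\<alpha>' \<in> L2 t T \<and> \<theta>' \<in> {t..T}"
  have "\<theta>' \<in> {0..T}" using p t by auto
  then have "-(\<Sum>i\<in>I. B i) \<le> phiI Dom \<gamma> b \<sigma> T \<psi> I \<theta>' (Ysol Dom \<gamma> b \<sigma> T t x \<alpha>' \<theta>')"
    using phi_lb[OF I] Ys_in[OF t x] p by blast
  moreover have "0 \<le> (LINT s:{t..\<theta>'}|lborel. (norm (\<alpha>' s))\<^sup>2)" by (rule sq_int_nonneg)
  ultimately show "-(\<Sum>i\<in>I. B i) \<le> (1/2) * (LINT s:{t..\<theta>'}|lborel. (norm (\<alpha>' s))\<^sup>2)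
          + phiI Dom \<gamma> b \<sigma> T \<psi> I \<theta>' (Ysol Dom \<gamma> b \<sigma> T t x \<alpha>' \<theta>')" by simp
qed

lemma u_ge:
  assumes t: "t \<in> {0..T}"
    and H: "\<And>\<alpha> r. \<alpha> \<in> L2 t T \<Longrightarrow> r \<in> {t..T} \<Longrightarrow>
       m \<le> (1/2) * (LINT s:{t..r}|lborel. (norm (\<alpha> s))\<^sup>2) + phiI Dom \<gamma> b \<sigma> T \<psi> I r (Ysol Dom \<gamma> b \<sigma> T t x \<alpha> r)"
  shows "m \<le> uI Dom \<gamma> b \<sigma> T \<psi> I t x"
  unfolding uI_def
  by (rule INF_pair_ge[where P="\<lambda>\<alpha> \<theta>. \<alpha> \<in> L2 t T \<and> \<theta> \<in> {t..T}"
        and f="\<lambda>\<alpha> \<theta>. (1/2) * (LINT s:{t..\<theta>}|lborel. (norm (\<alpha> s))\<^sup>2)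
          + phiI Dom \<gamma> b \<sigma> T \<psi> I \<theta> (Ysol Dom \<gamma> b \<sigma> T t x \<alpha> \<theta>)" and aa="\<lambda>_. 0" and cc="t"])
     (use H L2_zero[of t T] t in auto)

end


lemma Max_insert_ge:
  fixes S :: "real set"
  assumes "finite S" "S \<noteq> {}" "\<forall>s\<in>S. r \<le> s"
  shows "Max (insert r S) = Max S" "r \<le> Max S"
proof -
  have "Max S \<in> S" using Max_in assms by blast
  then show "r \<le> Max S" using assms by blast
  then show "Max (insert r S) = Max S" using Max_insert[OF assms(1,2)] by (simp add: max_def)
qed

lemma phi_single: "phiI Dom \<gamma> b \<sigma> T \<psi> {i} r y = \<psi> i r y"
  unfolding phiI_def by simp

lemma phi_multi: "card I \<noteq> 1 \<Longrightarrow> phiI Dom \<gamma> b \<sigma> T \<psi> I r y = Min ((\<lambda>i. \<psi> i r y + vI Dom \<gamma> b \<sigma> T \<psi> (I - {i}) r y) ` I)"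
  unfolding phiI_def by simp

context S begin

lemma vu_single:
  assumes t: "t \<in> {0..T}" and x: "x \<in> closure Dom"
  shows "vI Dom \<gamma> b \<sigma> T \<psi> {i} t x = uI Dom \<gamma> b \<sigma> T \<psi> {i} t x"
proof (rule antisym)
  show "vI Dom \<gamma> b \<sigma> T \<psi> {i} t x \<le> uI Dom \<gamma> b \<sigma> T \<psi> {i} t x"
  proof (rule u_ge[OF t])
    fix \<alpha> :: "real \<Rightarrow> real^'m" and r :: real assume a: "\<alpha> \<in> L2 t T" and r: "r \<in> {t..T}"
    have "vI Dom \<gamma> b \<sigma> T \<psi> {i} t x \<le> (1/2) * (LINT s:{t..Max ((\<lambda>_. r) ` {i})}|lborel. (norm (\<alpha> s))\<^sup>2)
          + (\<Sum>j\<in>{i}. \<psi> j ((\<lambda>_. r) j) (Ysol Dom \<gamma> b \<sigma> T t x \<alpha> ((\<lambda>_. r) j)))"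
      by (rule v_le[OF t x a]) (use r in simp)
    then show "vI Dom \<gamma> b \<sigma> T \<psi> {i} t x \<le> (1/2) * (LINT s:{t..r}|lborel. (norm (\<alpha> s))\<^sup>2)
          + phiI Dom \<gamma> b \<sigma> T \<psi> {i} r (Ysol Dom \<gamma> b \<sigma> T t x \<alpha> r)"
      by (simp add: phi_single)
  qed
  show "uI Dom \<gamma> b \<sigma> T \<psi> {i} t x \<le> vI Dom \<gamma> b \<sigma> T \<psi> {i} t x"
  proof (rule v_ge[OF t])
    fix \<alpha> :: "real \<Rightarrow> real^'m" and \<theta> :: "nat \<Rightarrow> real" assume a: "\<alpha> \<in> L2 t T" and th: "\<forall>j\<in>{i}. \<theta> j \<in> {t..T}"
    have "uI Dom \<gamma> b \<sigma> T \<psi> {i} t x \<le> (1/2) * (LINT s:{t..\<theta> i}|lborel. (norm (\<alpha> s))\<^sup>2)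
          + phiI Dom \<gamma> b \<sigma> T \<psi> {i} (\<theta> i) (Ysol Dom \<gamma> b \<sigma> T t x \<alpha> (\<theta> i))"
      by (rule u_le[OF t x _ _ a]) (use th in auto)
    then show "uI Dom \<gamma> b \<sigma> T \<psi> {i} t x \<le> (1/2) * (LINT s:{t..Max (\<theta> ` {i})}|lborel. (norm (\<alpha> s))\<^sup>2)
          + (\<Sum>j\<in>{i}. \<psi> j (\<theta> j) (Ysol Dom \<gamma> b \<sigma> T t x \<alpha> (\<theta> j)))"
      by (simp add: phi_single)
  qed
qed

lemma vu_multi:
  assumes t: "t \<in> {0..T}" and x: "x \<in> closure Dom" and I: "finite I" "I \<noteq> {}" and c: "card I \<noteq> 1"
  shows "vI Dom \<gamma> b \<sigma> T \<psi> I t x = uI Dom \<gamma> b \<sigma> T \<psi> I t x"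
proof (rule antisym)
  have ne: "I - {i} \<noteq> {}" if "i \<in> I" for i
  proof
    assume "I - {i} = {}"
    then have "I = {i}" using that by auto
    then show False using c by simp
  qed
  show "vI Dom \<gamma> b \<sigma> T \<psi> I t x \<le> uI Dom \<gamma> b \<sigma> T \<psi> I t x"
  proof (rule u_ge[OF t])
    fix \<alpha> :: "real \<Rightarrow> real^'m" and r :: real assume a: "\<alpha> \<in> L2 t T" and r: "r \<in> {t..T}"
    define y where "y = Ysol Dom \<gamma> b \<sigma> T t x \<alpha> r"
    have r0: "r \<in> {0..T}" using r t by auto
    have yC: "y \<in> closure Dom" unfolding y_def by (rule Ys_in[OF t x a r])
    have "Min ((\<lambda>i. \<psi> i r y + vI Dom \<gamma> b \<sigma> T \<psi> (I - {i}) r y) ` I) \<in> (\<lambda>i. \<psi> i r y + vI Dom \<gamma> b \<sigma> T \<psi> (I - {i}) r y) ` I"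
      using I by (intro Min_in) auto
    then obtain i0 where i0: "i0 \<in> I"
      and m0: "Min ((\<lambda>i. \<psi> i r y + vI Dom \<gamma> b \<sigma> T \<psi> (I - {i}) r y) ` I) = \<psi> i0 r y + vI Dom \<gamma> b \<sigma> T \<psi> (I - {i0}) r y"
      by blast
    have phi: "phiI Dom \<gamma> b \<sigma> T \<psi> I r y = \<psi> i0 r y + vI Dom \<gamma> b \<sigma> T \<psi> (I - {i0}) r y"
      using m0 by (simp add: phi_multi[OF c])
    define A where "A = (1/2) * (LINT s:{t..r}|lborel. (norm (\<alpha> s))\<^sup>2) + \<psi> i0 r y"
    have "vI Dom \<gamma> b \<sigma> T \<psi> I t x - A \<le> vI Dom \<gamma> b \<sigma> T \<psi> (I - {i0}) r y"
    proof (rule v_ge[OF r0])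
      fix \<beta> :: "real \<Rightarrow> real^'m" and \<theta>' :: "nat \<Rightarrow> real" assume be: "\<beta> \<in> L2 r T" and th': "\<forall>j\<in>I - {i0}. \<theta>' j \<in> {r..T}"
      define c where "c = (\<lambda>u. if u \<le> r then \<alpha> u else \<beta> u)"
      define \<theta> where "\<theta> = \<theta>'(i0 := r)"
      have cL: "c \<in> L2 t T" unfolding c_def using L2_glue[OF a be] r by auto
      have th: "\<forall>j\<in>I. \<theta> j \<in> {t..T}"
      proof
        fix j assume j: "j \<in> I"
        show "\<theta> j \<in> {t..T}"
        proof (cases "j = i0")
          case True then show ?thesis using r unfolding \<theta>_def by simp
        next
          case False
          then have "\<theta>' j \<in> {r..T}" using th' j by blast
          then show ?thesis using r False unfolding \<theta>_def by auto
        qed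
      qed
      define S where "S = \<theta>' ` (I - {i0})"
      have S: "finite S" "S \<noteq> {}" "\<forall>s\<in>S. r \<le> s" using I ne[OF i0] th' unfolding S_def by auto
      have img: "\<theta> ` I = insert r S"
      proof -
        have "\<theta> ` I = \<theta> ` (insert i0 (I - {i0}))" using i0 by (simp add: insert_absorb)
        also have "\<dots> = insert (\<theta> i0) (\<theta> ` (I - {i0}))" by (rule image_insert)
        also have "\<theta> i0 = r" unfolding \<theta>_def by simp
        also have "\<theta> ` (I - {i0}) = S" unfolding S_def \<theta>_def by (rule image_cong) auto
        finally show ?thesis .
      qed
      have MM: "Max (\<theta> ` I) = Max S" using Max_insert_ge(1)[OF S] img by simp
      have rM: "r \<le> Max S" using Max_insert_ge(2)[OF S] .
      have MT: "Max S \<le> T" using Max_in[OF S(1,2)] th' unfolding S_def by auto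
      have int: "(LINT s:{t..Max S}|lborel. (norm (c s))\<^sup>2)
          = (LINT s:{t..r}|lborel. (norm (\<alpha> s))\<^sup>2) + (LINT s:{r..Max S}|lborel. (norm (\<beta> s))\<^sup>2)"
        unfolding c_def by (rule int_split_glue[OF a be _ rM MT]) (use r in auto)
      have Yr: "Ysol Dom \<gamma> b \<sigma> T t x c r = y"
        unfolding c_def y_def by (rule concat(1)[OF t x a r be]) (use r in auto)
      have Yj: "Ysol Dom \<gamma> b \<sigma> T t x c (\<theta>' j) = Ysol Dom \<gamma> b \<sigma> T r y \<beta> (\<theta>' j)" if "j \<in> I - {i0}" for j
        unfolding c_def y_def by (rule concat(2)[OF t x a r be]) (use th' that in auto)
      have sum: "(\<Sum>j\<in>I. \<psi> j (\<theta> j) (Ysol Dom \<gamma> b \<sigma> T t x c (\<theta> j)))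
          = \<psi> i0 r y + (\<Sum>j\<in>I - {i0}. \<psi> j (\<theta>' j) (Ysol Dom \<gamma> b \<sigma> T r y \<beta> (\<theta>' j)))"
      proof -
        have "(\<Sum>j\<in>I. \<psi> j (\<theta> j) (Ysol Dom \<gamma> b \<sigma> T t x c (\<theta> j)))
            = \<psi> i0 (\<theta> i0) (Ysol Dom \<gamma> b \<sigma> T t x c (\<theta> i0)) + (\<Sum>j\<in>I - {i0}. \<psi> j (\<theta> j) (Ysol Dom \<gamma> b \<sigma> T t x c (\<theta> j)))"
          by (rule sum.remove[OF I(1) i0])
        also have "(\<Sum>j\<in>I - {i0}. \<psi> j (\<theta> j) (Ysol Dom \<gamma> b \<sigma> T t x c (\<theta> j)))
            = (\<Sum>j\<in>I - {i0}. \<psi> j (\<theta>' j) (Ysol Dom \<gamma> b \<sigma> T r y \<beta> (\<theta>' j)))"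
          by (rule sum.cong[OF refl]) (auto simp: \<theta>_def Yj)
        finally show ?thesis unfolding \<theta>_def using Yr by simp
      qed
      have "vI Dom \<gamma> b \<sigma> T \<psi> I t x \<le> (1/2) * (LINT s:{t..Max (\<theta> ` I)}|lborel. (norm (c s))\<^sup>2)
          + (\<Sum>j\<in>I. \<psi> j (\<theta> j) (Ysol Dom \<gamma> b \<sigma> T t x c (\<theta> j)))"
        by (rule v_le[OF t x cL th])
      also have "\<dots> = A + ((1/2) * (LINT s:{r..Max (\<theta>' ` (I - {i0}))}|lborel. (norm (\<beta> s))\<^sup>2)
          + (\<Sum>j\<in>I - {i0}. \<psi> j (\<theta>' j) (Ysol Dom \<gamma> b \<sigma> T r y \<beta> (\<theta>' j))))"
        unfolding MM int sum A_def S_def[symmetric] by (simp add: algebra_simps)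
      finally show "vI Dom \<gamma> b \<sigma> T \<psi> I t x - A \<le> (1/2) * (LINT s:{r..Max (\<theta>' ` (I - {i0}))}|lborel. (norm (\<beta> s))\<^sup>2)
          + (\<Sum>j\<in>I - {i0}. \<psi> j (\<theta>' j) (Ysol Dom \<gamma> b \<sigma> T r y \<beta> (\<theta>' j)))" by simp
    qed
    then show "vI Dom \<gamma> b \<sigma> T \<psi> I t x \<le> (1/2) * (LINT s:{t..r}|lborel. (norm (\<alpha> s))\<^sup>2)
          + phiI Dom \<gamma> b \<sigma> T \<psi> I r (Ysol Dom \<gamma> b \<sigma> T t x \<alpha> r)"
      unfolding y_def[symmetric] phi A_def by simp
  qed
  show "uI Dom \<gamma> b \<sigma> T \<psi> I t x \<le> vI Dom \<gamma> b \<sigma> T \<psi> I t x"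
  proof (rule v_ge[OF t])
    fix \<alpha> :: "real \<Rightarrow> real^'m" and \<theta> :: "nat \<Rightarrow> real" assume a: "\<alpha> \<in> L2 t T" and th: "\<forall>i\<in>I. \<theta> i \<in> {t..T}"
    define r where "r = Min (\<theta> ` I)"
    have "r \<in> \<theta> ` I" unfolding r_def using I by (intro Min_in) auto
    then obtain i0 where i0: "i0 \<in> I" and ri: "\<theta> i0 = r" by auto
    have rle: "r \<le> \<theta> j" if "j \<in> I" for j unfolding r_def using I that by simp
    have r: "r \<in> {t..T}" using th i0 ri by auto
    have r0: "r \<in> {0..T}" using r t by auto
    define y where "y = Ysol Dom \<gamma> b \<sigma> T t x \<alpha> r"
    have yC: "y \<in> closure Dom" unfolding y_def by (rule Ys_in[OF t x a r])
    have aL: "\<alpha> \<in> L2 r T" using L2_sub[OF a] r by auto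
    define S where "S = \<theta> ` (I - {i0})"
    have th': "\<forall>j\<in>I - {i0}. \<theta> j \<in> {r..T}" using th rle by auto
    have S: "finite S" "S \<noteq> {}" "\<forall>s\<in>S. r \<le> s" using I ne[OF i0] th' unfolding S_def by auto
    have img: "\<theta> ` I = insert r S"
    proof -
      have "\<theta> ` I = \<theta> ` (insert i0 (I - {i0}))" using i0 by (simp add: insert_absorb)
      also have "\<dots> = insert (\<theta> i0) (\<theta> ` (I - {i0}))" by (rule image_insert)
      finally show ?thesis unfolding S_def using ri by simp
    qed
    have MM: "Max (\<theta> ` I) = Max S" using Max_insert_ge(1)[OF S] img by simp
    have rM: "r \<le> Max S" using Max_insert_ge(2)[OF S] .
    have MT: "Max S \<le> T" using Max_in[OF S(1,2)] th' unfolding S_def by auto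
    have ia: "set_integrable lborel {t..T} (\<lambda>s. (norm (\<alpha> s))\<^sup>2)" using a unfolding L2_def by simp
    have int: "(LINT s:{t..Max S}|lborel. (norm (\<alpha> s))\<^sup>2)
        = (LINT s:{t..r}|lborel. (norm (\<alpha> s))\<^sup>2) + (LINT s:{r..Max S}|lborel. (norm (\<alpha> s))\<^sup>2)"
      by (rule int_split[OF ia _ rM MT]) (use r in auto)
    have Yj: "Ysol Dom \<gamma> b \<sigma> T r y \<alpha> (\<theta> j) = Ysol Dom \<gamma> b \<sigma> T t x \<alpha> (\<theta> j)" if "j \<in> I - {i0}" for j
      unfolding y_def by (rule restart[OF t x a r]) (use th' that in auto)
    have sum: "(\<Sum>j\<in>I. \<psi> j (\<theta> j) (Ysol Dom \<gamma> b \<sigma> T t x \<alpha> (\<theta> j)))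
        = \<psi> i0 r y + (\<Sum>j\<in>I - {i0}. \<psi> j (\<theta> j) (Ysol Dom \<gamma> b \<sigma> T r y \<alpha> (\<theta> j)))"
    proof -
      have "(\<Sum>j\<in>I. \<psi> j (\<theta> j) (Ysol Dom \<gamma> b \<sigma> T t x \<alpha> (\<theta> j)))
          = \<psi> i0 (\<theta> i0) (Ysol Dom \<gamma> b \<sigma> T t x \<alpha> (\<theta> i0)) + (\<Sum>j\<in>I - {i0}. \<psi> j (\<theta> j) (Ysol Dom \<gamma> b \<sigma> T t x \<alpha> (\<theta> j)))"
        by (rule sum.remove[OF I(1) i0])
      also have "(\<Sum>j\<in>I - {i0}. \<psi> j (\<theta> j) (Ysol Dom \<gamma> b \<sigma> T t x \<alpha> (\<theta> j)))
          = (\<Sum>j\<in>I - {i0}. \<psi> j (\<theta> j) (Ysol Dom \<gamma> b \<sigma> T r y \<alpha> (\<theta> j)))"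
        by (rule sum.cong[OF refl]) (simp add: Yj)
      finally show ?thesis using ri y_def by simp
    qed
    have "uI Dom \<gamma> b \<sigma> T \<psi> I t x \<le> (1/2) * (LINT s:{t..r}|lborel. (norm (\<alpha> s))\<^sup>2)
          + phiI Dom \<gamma> b \<sigma> T \<psi> I r y"
      unfolding y_def by (rule u_le[OF t x I a r])
    also have "phiI Dom \<gamma> b \<sigma> T \<psi> I r y \<le> \<psi> i0 r y + vI Dom \<gamma> b \<sigma> T \<psi> (I - {i0}) r y"
      unfolding phi_multi[OF c] using I i0 by (intro Min_le) auto
    also have "vI Dom \<gamma> b \<sigma> T \<psi> (I - {i0}) r y \<le> (1/2) * (LINT s:{r..Max S}|lborel. (norm (\<alpha> s))\<^sup>2)
          + (\<Sum>j\<in>I - {i0}. \<psi> j (\<theta> j) (Ysol Dom \<gamma> b \<sigma> T r y \<alpha> (\<theta> j)))"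
      unfolding S_def by (rule v_le[OF r0 yC aL th'])
    finally show "uI Dom \<gamma> b \<sigma> T \<psi> I t x \<le> (1/2) * (LINT s:{t..Max (\<theta> ` I)}|lborel. (norm (\<alpha> s))\<^sup>2)
          + (\<Sum>j\<in>I. \<psi> j (\<theta> j) (Ysol Dom \<gamma> b \<sigma> T t x \<alpha> (\<theta> j)))"
      unfolding MM int sum by (simp add: algebra_simps)
  qed
qed

end


theorem mainTheorem15:
  fixes Dom :: "(real^'d) set" and \<rho> :: "real^'d \<Rightarrow> real" and G n :: "real^'d \<Rightarrow> real^'d"
    and \<gamma> :: "real^'d \<Rightarrow> real^'d" and b :: "real \<Rightarrow> real^'d \<Rightarrow> real^'d"
    and \<sigma> :: "real \<Rightarrow> real^'d \<Rightarrow> real^'m^'d" and T c0 :: real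
    and \<psi> :: "nat \<Rightarrow> real \<Rightarrow> real^'d \<Rightarrow> real"
  assumes T: "T > 0"
    and O_bdd: "bounded Dom" and O_open: "open Dom"
    and O_reg: "W2inf_domain Dom \<rho> G"
    and n_def: "\<forall>x\<in>frontier Dom. n x = (1 / norm (G x)) *\<^sub>R G x"
    and \<gamma>_lip: "\<exists>L. L-lipschitz_on (closure Dom) \<gamma>"
    and c0: "c0 > 0" and \<gamma>_n: "\<forall>x\<in>frontier Dom. \<gamma> x \<bullet> n x \<ge> c0"
    and b_cont: "continuous_on ({0..T} \<times> closure Dom) (\<lambda>(t, x). b t x)"
    and \<sigma>_cont: "continuous_on ({0..T} \<times> closure Dom) (\<lambda>(t, x). \<sigma> t x)"
    and b_lip: "\<exists>L. \<forall>t\<in>{0..T}. L-lipschitz_on (closure Dom) (b t)"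
    and \<sigma>_lip: "\<exists>L. \<forall>t\<in>{0..T}. L-lipschitz_on (closure Dom) (\<sigma> t)"
    and wellposed: "\<forall>t\<in>{0..T}. \<forall>x\<in>closure Dom. \<forall>\<alpha>\<in>(L2 t T :: (real \<Rightarrow> real^'m) set).
        \<exists>Y z. refl_sol Dom \<gamma> b \<sigma> T t x \<alpha> Y z \<and>
          (\<forall>Y' z'. refl_sol Dom \<gamma> b \<sigma> T t x \<alpha> Y' z' \<longrightarrow> (\<forall>s\<in>{t..T}. Y' s = Y s))"
    and \<psi>_meas: "\<forall>i. set_borel_measurable borel ({0..T} \<times> closure Dom) (\<lambda>(t, x). \<psi> i t x)"
    and \<psi>_bdd: "\<forall>i. bounded ((\<lambda>(t, x). \<psi> i t x) ` ({0..T} \<times> closure Dom))"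
  shows "\<forall>I. finite I \<and> I \<noteq> {} \<longrightarrow>
           (\<forall>t\<in>{0..T}. \<forall>x\<in>closure Dom.
              vI Dom \<gamma> b \<sigma> T \<psi> I t x = uI Dom \<gamma> b \<sigma> T \<psi> I t x)"
proof (intro allI impI ballI)
  fix I :: "nat set" and t x
  assume I: "finite I \<and> I \<noteq> {}" and t: "t \<in> {0..T}" and x: "x \<in> closure Dom"
  have gc: "continuous_on (closure Dom) \<gamma>" using \<gamma>_lip lipschitz_on_continuous_on by blast
  have cpt: "compact (closure Dom)" using O_bdd by (simp add: compact_closure)
  obtain Bg where Bg: "\<forall>y\<in>\<gamma> ` closure Dom. norm y \<le> Bg"
    using compact_imp_bounded[OF compact_continuous_image[OF gc cpt]] unfolding bounded_iff by blast
  have gB: "\<And>y. y \<in> closure Dom \<Longrightarrow> norm (\<gamma> y) \<le> Bg" using Bg by blast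
  have "\<forall>i. \<exists>Bi. \<forall>v\<in>(\<lambda>(t, x). \<psi> i t x) ` ({0..T} \<times> closure Dom). norm v \<le> Bi"
    using \<psi>_bdd unfolding bounded_iff by blast
  then obtain B where B: "\<And>i. \<forall>v\<in>(\<lambda>(t, x). \<psi> i t x) ` ({0..T} \<times> closure Dom). norm v \<le> B i"
    by metis
  have \<psi>B: "\<And>i s y. s \<in> {0..T} \<Longrightarrow> y \<in> closure Dom \<Longrightarrow> \<bar>\<psi> i s y\<bar> \<le> B i"
  proof -
    fix i s y assume "s \<in> {0..T}" "y \<in> closure Dom"
    then have "\<psi> i s y \<in> (\<lambda>(t, x). \<psi> i t x) ` ({0..T} \<times> closure Dom)" by force
    then show "\<bar>\<psi> i s y\<bar> \<le> B i" using B[of i] by fastforce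
  qed
  interpret S Dom \<gamma> b \<sigma> T \<psi> B Bg
    by (rule S.intro[OF b_cont \<sigma>_cont gc gB wellposed \<psi>B])
  show "vI Dom \<gamma> b \<sigma> T \<psi> I t x = uI Dom \<gamma> b \<sigma> T \<psi> I t x"
  proof (cases "card I = 1")
    case True
    then obtain i where "I = {i}" by (auto simp: card_Suc_eq)
    then show ?thesis using vu_single[OF t x] by simp
  next
    case False
    then show ?thesis using vu_multi[OF t x _ _ False] I by blast
  qed
qed


end
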